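(* Let $(\rho_n)_{n\ge1}$ with $\rho_n$ a probability measure on $\mathbb{Y}_n$. Then $(\rho_n)$ is CLT-appropriate if and only if there exist reals $(c_k)_{k\ge1}$ and $(d_{k_1,k_2})_{k_1,k_2\ge1}$ such that: (1) for every cycle $\sigma\in S_\infty$ of length $k$, $\lim_n n^{|\sigma|/2}M_{\rho_n}(\sigma)=c_k$; (2) for every two cycles $\sigma_1,\sigma_2$ with disjoint supports and lengths $k_1,k_2$, $\lim_n n^{(|\sigma_1|+|\sigma_2|)/2+1}\kappa_{\rho_n,2}(\sigma_1,\sigma_2)=d_{k_1,k_2}$; (3) for every $r\ge3$ and cycles $\sigma_1,\dots,\sigma_r$ with pairwise disjoint supports, $\lim_n n^{(|\sigma_1|+\dots+|\sigma_r|+r)/2}\kappa_{\rho_n,r}(\sigma_1,\dots,\sigma_r)=0$.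
   Context: $\mathbb{Y}_n$: partitions of $n$; $S_\infty=\bigcup_mS_m$; $|\sigma|$ is the minimal number of transpositions with product $\sigma$. $M_\rho(\sigma)=\sum_{\lambda\in\mathbb{Y}_n}\rho(\lambda)\chi_\lambda(\tau)/\dim\lambda$ if $\sigma$ is conjugate to some $\tau\in S_n$, else $0$. Permutation-cumulant: $\kappa_{\rho,r}(\sigma_1,\dots,\sigma_r)=\sum_{\pi}(-1)^{|\pi|-1}(|\pi|-1)!\prod_{B\in\pi}M_\rho(\prod_{j\in B}\sigma_j)$ over set partitions $\pi$ of $\{1,\dots,r\}$. Young generating function $A_\rho=\sum_{\vec i}M_\rho(\sigma_{\vec i})\prod_{k\ge1}n^{i_k(k-1)/2}x_k^{i_k}/i_k!$ over finitely supported $\vec i$, $\sigma_{\vec i}$ any permutation with $i_k$ cycles of length $k$ for $k\ge2$. $(\rho_n)$ is CLT-appropriate if for some reals $c_i,d_{i,j}$: $\partial_i\ln A_{\rho_n}|_{\vec x=0}\to c_i$, $n\,\partial_i\partial_j\ln A_{\rho_n}|_{\vec x=0}\to d_{i,j}$, and $n^{r/2}\partial_{i_1}\cdots\partial_{i_r}\ln A_{\rho_n}|_{\vec x=0}\to0$ for $r\ge3$ (formal derivatives). *)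

theory Defs
  imports "HOL-Analysis.Analysis" "HOL-Combinatorics.Combinatorics" "HOL-Library.Multiset"
    "HOL-Library.Disjoint_Sets"
begin

definition partitions :: "nat \<Rightarrow> nat list set" where
  "partitions n = {lam. sorted_wrt (\<ge>) lam \<and> 0 \<notin> set lam \<and> sum_list lam = n}"

text \<open>Irreducible character chi_lam evaluated at the conjugacy class with cycle type mu
  (a list of cycle lengths), defined by the Frobenius character formula:
  chi_lam(mu) is the coefficient of x^(lam+delta) in a_delta * p_mu, in l = length lam
  variables.  The coefficient of x^e in p_mu = prod_i (sum_j x_j^(mu_i)) is the number of maps
  f from the parts of mu to the variables with sum_{f i = j} mu_i = e_j.\<close>
definition character :: "nat list \<Rightarrow> nat list \<Rightarrow> int" where
  "character lam mu =
     (let l = length lam in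
      \<Sum>w\<in>{w. w permutes {..<l}}. sign w *
        int (card {f \<in> {..<length mu} \<rightarrow>\<^sub>E {..<l}.
               \<forall>j<l. int (\<Sum>i\<in>{i. i < length mu \<and> f i = j}. mu ! i)
                     = int (lam ! j) + int (l - 1 - j) - int (l - 1 - w j)}))"

definition dimension :: "nat list \<Rightarrow> int" where
  "dimension lam = character lam (replicate (sum_list lam) 1)"

definition prob_on_Y :: "nat \<Rightarrow> (nat list \<Rightarrow> real) \<Rightarrow> bool" where
  "prob_on_Y n rho \<longleftrightarrow> (\<forall>lam\<in>partitions n. rho lam \<ge> 0) \<and> (\<Sum>lam\<in>partitions n. rho lam) = 1"

definition S_inf :: "(nat \<Rightarrow> nat) set" where
  "S_inf = {s. \<exists>m. s permutes {..<m}}"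

definition supp :: "(nat \<Rightarrow> nat) \<Rightarrow> nat set" where
  "supp s = {x. s x \<noteq> x}"

definition tlen :: "(nat \<Rightarrow> nat) \<Rightarrow> nat" where
  "tlen s = (LEAST k. \<exists>ts. length ts = k \<and> (\<forall>(a,b)\<in>set ts. a \<noteq> b) \<and>
                s = foldr (\<lambda>(a,b) g. Transposition.transpose a b \<circ> g) ts id)"

text \<open>s is a cycle of length k (k \<ge> 1; a cycle of length 1 is the identity).\<close>
definition is_cycle_len :: "nat \<Rightarrow> (nat \<Rightarrow> nat) \<Rightarrow> bool" where
  "is_cycle_len k s \<longleftrightarrow> k \<ge> 1 \<and> (\<exists>cs. distinct cs \<and> length cs = k \<and> s = cycle_of_list cs)"

text \<open>Cycle type (as a list of cycle lengths, fixed points included) of t in S_n.\<close>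
definition cycle_type :: "nat \<Rightarrow> (nat \<Rightarrow> nat) \<Rightarrow> nat list" where
  "cycle_type n t = sorted_list_of_multiset (image_mset card (mset_set ((\<lambda>x. orbit t x) ` {..<n})))"

definition conjugate :: "(nat \<Rightarrow> nat) \<Rightarrow> (nat \<Rightarrow> nat) \<Rightarrow> bool" where
  "conjugate s t \<longleftrightarrow> (\<exists>g\<in>S_inf. s = g \<circ> t \<circ> inv g)"

definition Mrho :: "nat \<Rightarrow> (nat list \<Rightarrow> real) \<Rightarrow> (nat \<Rightarrow> nat) \<Rightarrow> real" where
  "Mrho n rho s =
     (if \<exists>t. t permutes {..<n} \<and> conjugate s t then
        (let t = (SOME t. t permutes {..<n} \<and> conjugate s t) in
         \<Sum>lam\<in>partitions n. rho lam * of_int (character lam (cycle_type n t)) / of_int (dimension lam))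
      else 0)"

definition prod_perms :: "(nat \<Rightarrow> nat) list \<Rightarrow> nat set \<Rightarrow> (nat \<Rightarrow> nat)" where
  "prod_perms ss B = foldr (\<lambda>j g. (ss ! j) \<circ> g) (sorted_list_of_set B) id"

definition kappa :: "nat \<Rightarrow> (nat list \<Rightarrow> real) \<Rightarrow> (nat \<Rightarrow> nat) list \<Rightarrow> real" where
  "kappa n rho ss =
     (\<Sum>P\<in>{P. partition_on {..<length ss} P}.
        (-1) ^ (card P - 1) * fact (card P - 1) * (\<Prod>B\<in>P. Mrho n rho (prod_perms ss B)))"

text \<open>A formal power series is given by its coefficients; a monomial prod_k x_k^(i_k) is
  encoded by the multiset containing k with multiplicity i_k.\<close>
type_synonym mps = "nat multiset \<Rightarrow> real"

definition mps_mult :: "mps \<Rightarrow> mps \<Rightarrow> mps" where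
  "mps_mult F G a = (\<Sum>b\<in>{b. b \<subseteq># a}. F b * G (a - b))"

primrec mps_pow :: "mps \<Rightarrow> nat \<Rightarrow> mps" where
  "mps_pow F 0 = (\<lambda>a. if a = {#} then 1 else 0)"
| "mps_pow F (Suc m) = mps_mult F (mps_pow F m)"

text \<open>Logarithm of a series with constant term 1: ln(1+U) = sum_m (-1)^(m-1) U^m / m;
  only m \<le> total degree contributes to a given coefficient.\<close>
definition mps_ln :: "mps \<Rightarrow> mps" where
  "mps_ln A a = (let U = (\<lambda>b. if b = {#} then 0 else A b) in
     \<Sum>m\<in>{1..size a}. (-1) ^ (m - 1) / real m * mps_pow U m a)"

text \<open>Formal partial derivative d_{j_1} ... d_{j_r} F evaluated at x = 0.\<close>
definition deriv0 :: "mps \<Rightarrow> nat list \<Rightarrow> real" where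
  "deriv0 F js = (\<Prod>k\<in>set js. fact (count (mset js) k)) * F (mset js)"

definition num_cycles :: "(nat \<Rightarrow> nat) \<Rightarrow> nat \<Rightarrow> nat" where
  "num_cycles s k = card {Orb. \<exists>x. Orb = orbit s x \<and> card Orb = k}"

definition young_gf :: "nat \<Rightarrow> (nat list \<Rightarrow> real) \<Rightarrow> mps" where
  "young_gf n rho a =
     (if 0 \<in># a then 0 else
      Mrho n rho (SOME s. s \<in> S_inf \<and> (\<forall>k\<ge>2. num_cycles s k = count a k)) *
      (\<Prod>k\<in>set_mset a. real n powr (real (count a k * (k - 1)) / 2) / fact (count a k)))"

definition CLT_appropriate :: "(nat \<Rightarrow> nat list \<Rightarrow> real) \<Rightarrow> bool" where
  "CLT_appropriate rho \<longleftrightarrow> (\<exists>(c :: nat \<Rightarrow> real) (d :: nat \<Rightarrow> nat \<Rightarrow> real).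
     (\<forall>i\<ge>1. (\<lambda>n. deriv0 (mps_ln (young_gf n (rho n))) [i]) \<longlonglongrightarrow> c i) \<and>
     (\<forall>i\<ge>1. \<forall>j\<ge>1. (\<lambda>n. real n * deriv0 (mps_ln (young_gf n (rho n))) [i, j]) \<longlonglongrightarrow> d i j) \<and>
     (\<forall>is. length is \<ge> 3 \<longrightarrow> (\<forall>i\<in>set is. i \<ge> 1) \<longrightarrow>
        (\<lambda>n. real n powr (real (length is) / 2) * deriv0 (mps_ln (young_gf n (rho n))) is)
          \<longlonglongrightarrow> 0))"

end

theory Submission
  imports Defs
begin



definition tprod :: "(nat \<times> nat) list \<Rightarrow> nat \<Rightarrow> nat" where
  "tprod ts = foldr (\<lambda>(a,b) g. Transposition.transpose a b \<circ> g) ts id"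

lemma tprod_simps[simp]: "tprod [] = id" "tprod ((a,b) # ts) = Transposition.transpose a b \<circ> tprod ts"
  by (simp_all add: tprod_def)

fun lab :: "(nat \<times> nat) list \<Rightarrow> nat \<Rightarrow> nat" where
  "lab [] x = x"
| "lab ((a,b) # ts) x = (if lab ts x = lab ts a then lab ts b else lab ts x)"

lemma lab_tprod: "lab ts (tprod ts x) = lab ts x"
proof (induction ts arbitrary: x)
  case Nil then show ?case by simp
next
  case (Cons p ts)
  obtain a b where p: "p = (a, b)" by fastforce
  let ?g = "tprod ts" and ?f = "lab ts"
  have IH: "?f (?g y) = ?f y" for y using Cons.IH .
  show ?case
  proof (cases "?g x = a")
    case True
    then show ?thesis using IH[of x] p by (auto simp: Transposition.transpose_def)
  next
    case F1: False
    show ?thesis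
    proof (cases "?g x = b")
      case True
      then show ?thesis using IH[of x] p F1 by (auto simp: Transposition.transpose_def)
    next
      case False
      then show ?thesis using IH[of x] p F1 by (auto simp: Transposition.transpose_def)
    qed
  qed
qed

lemma lab_card: "finite V \<Longrightarrow> card V \<le> card (lab ts ` V) + length ts"
proof (induction ts)
  case Nil then show ?case by simp
next
  case (Cons p ts)
  obtain a b where p: "p = (a, b)" by fastforce
  have "lab ts ` V - {lab ts a} \<subseteq> lab (p # ts) ` V"
  proof
    fix y assume "y \<in> lab ts ` V - {lab ts a}"
    then obtain x where "x \<in> V" "y = lab ts x" "lab ts x \<noteq> lab ts a" by auto
    then show "y \<in> lab (p # ts) ` V" using p by (auto intro!: image_eqI[of _ _ x])
  qed
  then have "card (lab ts ` V - {lab ts a}) \<le> card (lab (p # ts) ` V)"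
    using Cons.prems by (intro card_mono) auto
  moreover have "card (lab ts ` V) \<le> card (lab ts ` V - {lab ts a}) + 1"
    by (metis card_Diff1_le card_Diff_singleton_if Cons.prems finite_imageI le_add_diff_inverse2 le_diff_conv nat_le_linear diff_le_self)
  ultimately show ?case using Cons by simp
qed

lemma cycle_zip: "distinct cs \<Longrightarrow> cycle_of_list cs = tprod (zip cs (tl cs)) \<and> (\<forall>(a,b)\<in>set (zip cs (tl cs)). a \<noteq> b)"
proof (induction cs rule: cycle_of_list.induct)
  case (1 i j cs)
  then show ?case by (auto dest: set_zip_leftD)
qed simp_all

lemma cycle_next: "distinct cs \<Longrightarrow> Suc i < length cs \<Longrightarrow> cycle_of_list cs (cs ! i) = cs ! Suc i"
proof -
  assume d: "distinct cs" and i: "Suc i < length cs"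
  have "map (cycle_of_list cs) cs = rotate1 cs" using cyclic_rotation[OF d, of 1] by simp
  then have "cycle_of_list cs (cs ! i) = rotate1 cs ! i" using i by (metis Suc_lessD nth_map)
  also have "\<dots> = cs ! Suc i" using i
    by (cases cs) (auto simp: nth_append)
  finally show ?thesis .
qed

lemma tlen_cycle:
  assumes d: "distinct cs" and ne: "cs \<noteq> []"
  shows "tlen (cycle_of_list cs) = length cs - 1"
  unfolding tlen_def
proof (rule Least_equality)
  show "\<exists>ts. length ts = length cs - 1 \<and> (\<forall>(a, b)\<in>set ts. a \<noteq> b) \<and>
        cycle_of_list cs = foldr (\<lambda>(a, b) g. Transposition.transpose a b \<circ> g) ts id"
    using cycle_zip[OF d] by (intro exI[of _ "zip cs (tl cs)"]) (simp add: tprod_def)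
next
  fix k assume "\<exists>ts. length ts = k \<and> (\<forall>(a, b)\<in>set ts. a \<noteq> b) \<and>
        cycle_of_list cs = foldr (\<lambda>(a, b) g. Transposition.transpose a b \<circ> g) ts id"
  then obtain ts where ts: "length ts = k" "cycle_of_list cs = tprod ts" by (auto simp: tprod_def)
  have same: "lab ts (cs ! i) = lab ts (cs ! 0)" if "i < length cs" for i
    using that
  proof (induction i)
    case (Suc i)
    have "lab ts (cs ! Suc i) = lab ts (tprod ts (cs ! i))"
      using cycle_next[OF d Suc.prems] ts(2) by simp
    also have "\<dots> = lab ts (cs ! i)" by (rule lab_tprod)
    finally show ?case using Suc by simp
  qed simp
  have "lab ts ` set cs \<subseteq> {lab ts (cs ! 0)}"
    using same by (auto simp: in_set_conv_nth)
  then have "card (lab ts ` set cs) \<le> 1"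
    by (metis card.empty card_mono finite.emptyI finite.insertI is_singleton_altdef is_singleton_def le_numeral_extra(4) subset_singletonD zero_le)
  moreover have "card (set cs) \<le> card (lab ts ` set cs) + length ts" by (rule lab_card) simp
  moreover have "card (set cs) = length cs" using d by (simp add: distinct_card)
  ultimately show "length cs - 1 \<le> k" using ts(1) by simp
qed



definition prodL :: "nat list list \<Rightarrow> nat \<Rightarrow> nat" where
  "prodL L = foldr (\<lambda>c g. cycle_of_list c \<circ> g) L id"

lemma prodL_simps[simp]: "prodL [] = id" "prodL (c # L) = cycle_of_list c \<circ> prodL L"
  by (simp_all add: prodL_def)

definition validL :: "nat list list \<Rightarrow> bool" where
  "validL L \<longleftrightarrow> (\<forall>c\<in>set L. length c \<ge> 2) \<and> distinct (concat L)"

lemma validL_cons: "validL (c # L) \<longleftrightarrow> length c \<ge> 2 \<and> distinct c \<and> set c \<inter> set (concat L) = {} \<and> validL L"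
  by (auto simp: validL_def)

lemma validL_distinct: "validL L \<Longrightarrow> c \<in> set L \<Longrightarrow> distinct c"
  by (auto simp: validL_def distinct_concat_iff)

lemma prodL_out: "(\<forall>c\<in>set L. x \<notin> set c) \<Longrightarrow> prodL L x = x"
  by (induction L) (auto simp: id_outside_supp)

lemma cycle_in: "x \<in> set c \<Longrightarrow> cycle_of_list c x \<in> set c"
  using cycle_permutes[of c] by (simp add: permutes_in_image)

lemma prodL_in: "validL L \<Longrightarrow> c \<in> set L \<Longrightarrow> x \<in> set c \<Longrightarrow> prodL L x = cycle_of_list c x"
proof (induction L)
  case Nil then show ?case by simp
next
  case (Cons c' L)
  have v: "length c' \<ge> 2" "distinct c'" "set c' \<inter> set (concat L) = {}" "validL L"
    using Cons.prems(1) by (auto simp: validL_cons)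
  show ?case
  proof (cases "c = c'")
    case True
    then have "\<forall>d\<in>set L. x \<notin> set d" using v(3) Cons.prems(3) by auto
    then show ?thesis using True by (simp add: prodL_out)
  next
    case False
    then have cL: "c \<in> set L" using Cons.prems(2) by simp
    then have "prodL L x = cycle_of_list c x" using Cons.IH v(4) Cons.prems(3) by simp
    moreover have "cycle_of_list c x \<in> set (concat L)" using cycle_in[OF Cons.prems(3)] cL by auto
    then have "cycle_of_list c x \<notin> set c'" using v(3) by auto
    ultimately show ?thesis by (simp add: id_outside_supp)
  qed
qed

lemma orbit_cycle:
  assumes d: "distinct c" and x: "x \<in> set c"
  shows "orbit (cycle_of_list c) x = set c"
proof -
  obtain i where i: "i < length c" "x = c ! i" using x by (auto simp: in_set_conv_nth)
  have pw: "(cycle_of_list c ^^ n) x = c ! ((n + i) mod length c)" for n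
  proof -
    have "map (cycle_of_list c ^^ n) c = rotate n c" by (rule cyclic_rotation[OF d])
    then have "(cycle_of_list c ^^ n) (c ! i) = rotate n c ! i" using i(1) by (metis nth_map)
    then show ?thesis using i by (simp add: nth_rotate)
  qed
  have "orbit (cycle_of_list c) x = {(cycle_of_list c ^^ n) x | n. True}"
    by (rule orbit_altdef_permutation[OF permutation_of_cycle])
  also have "\<dots> = set c"
  proof (intro equalityI subsetI)
    fix y assume "y \<in> {(cycle_of_list c ^^ n) x | n. True}"
    then obtain n where "y = c ! ((n + i) mod length c)" using pw by auto
    moreover have "(n + i) mod length c < length c" using i(1) by (intro mod_less_divisor) linarith
    ultimately show "y \<in> set c" by simp
  next
    fix y assume "y \<in> set c"
    then obtain j where j: "j < length c" "y = c ! j" by (auto simp: in_set_conv_nth)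
    have "length c - i + j + i = j + length c" using i(1) by simp
    then have "(length c - i + j + i) mod length c = j" using j(1) by simp
    then have "(cycle_of_list c ^^ (length c - i + j)) x = y" using pw j by simp
    then show "y \<in> {(cycle_of_list c ^^ n) x | n. True}" by blast
  qed
  finally show ?thesis .
qed

lemma orbit_prodL_in:
  assumes v: "validL L" and c: "c \<in> set L" and x: "x \<in> set c"
  shows "orbit (prodL L) x = set c"
proof -
  have "orbit (prodL L) x = orbit (cycle_of_list c) x"
    by (rule orbit_cong0[OF x]) (use cycle_in prodL_in[OF v c] in auto)
  then show ?thesis using orbit_cycle[OF validL_distinct[OF v c] x] by simp
qed

lemma orbit_prodL_out:
  assumes "\<forall>c\<in>set L. x \<notin> set c"
  shows "orbit (prodL L) x = {x}"
  using prodL_out[OF assms] orbit_eq_singleton_iff by metis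

lemma validL_distinct_L: "validL L \<Longrightarrow> distinct L"
proof (induction L)
  case (Cons c L)
  have v: "length c \<ge> 2" "set c \<inter> set (concat L) = {}" "validL L"
    using Cons.prems by (simp_all add: validL_cons)
  have "c \<notin> set L"
  proof
    assume "c \<in> set L"
    then have "set c \<subseteq> set (concat L)" by auto
    then have "set c = {}" using v(2) by (simp add: Int_absorb2)
    then show False using v(1) by simp
  qed
  moreover have "distinct L" using Cons.IH v(3) by simp
  ultimately show ?case by simp
qed simp

lemma num_cycles_prodL:
  assumes v: "validL L" and k: "k \<ge> 2"
  shows "num_cycles (prodL L) k = count (mset (map length L)) k"
proof -
  have eq: "{Orb. \<exists>x. Orb = orbit (prodL L) x \<and> card Orb = k} = set ` {c \<in> set L. length c = k}"
  proof (intro equalityI subsetI)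
    fix Orb assume "Orb \<in> {Orb. \<exists>x. Orb = orbit (prodL L) x \<and> card Orb = k}"
    then obtain x where x: "Orb = orbit (prodL L) x" "card Orb = k" by auto
    show "Orb \<in> set ` {c \<in> set L. length c = k}"
    proof (cases "\<exists>c\<in>set L. x \<in> set c")
      case True
      then obtain c where c: "c \<in> set L" "x \<in> set c" by auto
      then have "Orb = set c" using orbit_prodL_in[OF v] x by simp
      moreover have "length c = k" using x(2) calculation validL_distinct[OF v c(1)] by (simp add: distinct_card)
      ultimately show ?thesis using c by auto
    next
      case False
      then have "Orb = {x}" using orbit_prodL_out x by auto
      then show ?thesis using x k by simp
    qed
  next
    fix Orb assume "Orb \<in> set ` {c \<in> set L. length c = k}"
    then obtain c where c: "c \<in> set L" "length c = k" "Orb = set c" by auto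
    then have "c \<noteq> []" using k by auto
    then have "hd c \<in> set c" by simp
    then have "Orb = orbit (prodL L) (hd c)" using orbit_prodL_in[OF v c(1)] c by simp
    moreover have "card Orb = k" using c validL_distinct[OF v c(1)] by (simp add: distinct_card)
    ultimately show "Orb \<in> {Orb. \<exists>x. Orb = orbit (prodL L) x \<and> card Orb = k}" by auto
  qed
  have inj: "inj_on set {c \<in> set L. length c = k}"
  proof (rule inj_onI)
    fix c d assume c: "c \<in> {c \<in> set L. length c = k}" and d: "d \<in> {c \<in> set L. length c = k}" and e: "set c = set d"
    show "c = d"
    proof (rule ccontr)
      assume "c \<noteq> d"
      then have "set c \<inter> set d = {}" using v c d by (auto simp: validL_def distinct_concat_iff)
      moreover have "c \<noteq> []" using c k by auto
      ultimately show False using e by auto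
    qed
  qed
  have "num_cycles (prodL L) k = card {c \<in> set L. length c = k}"
    unfolding num_cycles_def eq using card_image[OF inj] by simp
  also have "\<dots> = length (filter (\<lambda>c. length c = k) L)"
    using validL_distinct_L[OF v] by (metis distinct_filter distinct_card set_filter)
  also have "\<dots> = count (mset (map length L)) k"
    by (induction L) auto
  finally show ?thesis .
qed


lemma Sinf_permutes: "f permutes A \<Longrightarrow> finite (A :: nat set) \<Longrightarrow> f \<in> S_inf"
proof -
  assume f: "f permutes A" and fin: "finite A"
  obtain m where "A \<subseteq> {..<m}" using fin finite_nat_iff_bounded by blast
  then have "f permutes {..<m}" using permutes_subset[OF f] by blast
  then show ?thesis by (auto simp: S_inf_def)
qed

lemma Sinf_id: "id \<in> S_inf"
  using Sinf_permutes[OF permutes_id[of "{}"]] by simp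

lemma Sinf_comp: "f \<in> S_inf \<Longrightarrow> g \<in> S_inf \<Longrightarrow> f \<circ> g \<in> S_inf"
proof -
  assume "f \<in> S_inf" "g \<in> S_inf"
  then obtain m1 m2 where "f permutes {..<m1}" "g permutes {..<m2}" by (auto simp: S_inf_def)
  then have "f permutes {..<max m1 m2}" "g permutes {..<max m1 m2}"
    by (auto intro: permutes_subset)
  then have "f \<circ> g permutes {..<max m1 m2}" by (rule permutes_compose[rotated])
  then show ?thesis by (auto simp: S_inf_def)
qed

lemma Sinf_inv: "f \<in> S_inf \<Longrightarrow> inv f \<in> S_inf"
  by (auto simp: S_inf_def intro: permutes_inv)

lemma Sinf_bij: "f \<in> S_inf \<Longrightarrow> bij f"
  by (auto simp: S_inf_def intro: permutes_bij)

lemma Sinf_transpose: "Transposition.transpose a b \<in> S_inf"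
  by (rule Sinf_permutes[OF permutes_swap_id[of a "{a, b}" b]]) auto

lemma cycle_decomp_list:
  "cycle_decomp I p \<Longrightarrow> \<exists>L. (\<forall>c\<in>set L. distinct c) \<and> distinct (concat L) \<and> set (concat L) = I \<and> p = prodL L"
proof (induction rule: cycle_decomp.induct)
  case empty
  then show ?case by (intro exI[of _ "[]"]) simp
next
  case (comp I p cs)
  then obtain L where L: "\<forall>c\<in>set L. distinct c" "distinct (concat L)" "set (concat L) = I" "p = prodL L" by blast
  show ?case using comp L by (intro exI[of _ "cs # L"]) auto
qed

definition filt :: "nat list list \<Rightarrow> nat list list" where
  "filt L = filter (\<lambda>c. length c \<ge> 2) L"

lemma prodL_filt: "prodL (filt L) = prodL L"
proof (induction L)
  case (Cons c L)
  show ?case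
  proof (cases "length c \<ge> 2")
    case True then show ?thesis using Cons by (simp add: filt_def)
  next
    case False
    then have "cycle_of_list c = id"
      by (cases c rule: cycle_of_list.cases) auto
    then show ?thesis using Cons False by (simp add: filt_def)
  qed
qed (simp add: filt_def)

lemma distinct_concat_filter: "distinct (concat L) \<Longrightarrow> distinct (concat (filter P L))"
  by (induction L) auto

lemma validL_filt: "distinct (concat L) \<Longrightarrow> validL (filt L)"
  by (simp add: validL_def filt_def distinct_concat_filter)

lemma Sinf_decomp: "s \<in> S_inf \<Longrightarrow> \<exists>L. validL L \<and> s = prodL L"
proof -
  assume "s \<in> S_inf"
  then obtain m where "s permutes {..<m}" by (auto simp: S_inf_def)
  then have "cycle_decomp {..<m} s" by (intro cycle_decomposition) auto
  then obtain L where L: "distinct (concat L)" "s = prodL L" using cycle_decomp_list by blast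
  then show ?thesis using validL_filt[OF L(1)] prodL_filt[of L] by metis
qed

lemma prodL_Sinf: "prodL L \<in> S_inf"
proof (induction L)
  case Nil show ?case unfolding prodL_simps by (rule Sinf_id)
next
  case (Cons c L)
  show ?case unfolding prodL_simps by (rule Sinf_comp[OF Sinf_permutes[OF cycle_permutes] Cons.IH]) simp
qed

lemma reorder:
  "mset (map length L1) = mset (map length L2) \<Longrightarrow> \<exists>L2'. mset L2' = mset L2 \<and> map length L2' = map length L1"
proof (induction L1 arbitrary: L2)
  case Nil then show ?case by simp
next
  case (Cons c R)
  have "length c \<in># mset (map length L2)" using Cons.prems by (metis list.set_intros(1) list.simps(9) set_mset_mset)
  then obtain c2 where c2: "c2 \<in> set L2" "length c2 = length c" by auto
  have "mset (map length (remove1 c2 L2)) = mset (map length L2) - {#length c2#}"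
    using c2(1) by (simp add: mset_remove1 image_mset_Diff)
  also have "mset (map length L2) = add_mset (length c) (mset (map length R))" using Cons.prems by simp
  then have "mset (map length L2) - {#length c2#} = mset (map length R)" using c2(2) by simp
  finally obtain R2 where R2: "mset R2 = mset (remove1 c2 L2)" "map length R2 = map length R"
    using Cons.IH by metis
  show ?case
    using R2 c2 by (intro exI[of _ "c2 # R2"]) (simp add: mset_remove1)
qed

lemma validL_mset: "validL L \<Longrightarrow> mset L' = mset L \<Longrightarrow> validL L'"
proof -
  assume v: "validL L" and m: "mset L' = mset L"
  have s: "set L' = set L" using m by (metis set_mset_mset)
  have "mset (concat L') = mset (concat L)"
    by (simp add: mset_concat m sum_mset_sum_list[symmetric] mset_map)
  then have "distinct (concat L')" using v perm_distinct_iff by (auto simp: validL_def)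
  then show ?thesis using v s by (simp add: validL_def)
qed

lemma prodL_set_eq: "validL L \<Longrightarrow> validL L' \<Longrightarrow> set L = set L' \<Longrightarrow> prodL L = prodL L'"
proof
  fix x assume v: "validL L" "validL L'" and s: "set L = set L'"
  show "prodL L x = prodL L' x"
  proof (cases "\<exists>c\<in>set L. x \<in> set c")
    case True
    then obtain c where "c \<in> set L" "x \<in> set c" by blast
    then show ?thesis using prodL_in[OF v(1)] prodL_in[OF v(2)] s by simp
  next
    case False
    then show ?thesis using prodL_out[of L x] prodL_out[of L' x] s by simp
  qed
qed

lemma prodL_conj:
  assumes g: "bij g" and d: "\<forall>c\<in>set L. distinct c"
  shows "prodL (map (map g) L) = g \<circ> prodL L \<circ> inv g"
  using d
proof (induction L)
  case Nil
  then show ?case using g by (simp add: fun_eq_iff surj_f_inv_f bij_is_surj)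
next
  case (Cons c L)
  have "prodL (map (map g) (c # L)) = (g \<circ> cycle_of_list c \<circ> inv g) \<circ> (g \<circ> prodL L \<circ> inv g)"
    using Cons conjugation_of_cycle[OF _ g, of c] by (simp add: comp_def)
  also have "\<dots> = g \<circ> cycle_of_list c \<circ> (inv g \<circ> g) \<circ> prodL L \<circ> inv g" by (simp add: o_assoc)
  also have "inv g \<circ> g = id" using g by (simp add: bij_is_inj)
  finally show ?case by (simp add: o_assoc)
qed

lemma map_map_concat:
  "map length A = map length B \<Longrightarrow> map g (concat A) = concat B \<Longrightarrow> map (map g) A = B"
proof (induction A arbitrary: B)
  case Nil then show ?case by simp
next
  case (Cons a A)
  then obtain b B' where B: "B = b # B'" "length a = length b" "map length A = map length B'" by (cases B) auto
  have "map g a @ map g (concat A) = b @ concat B'" using Cons.prems B by simp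
  then have "map g a = b" "map g (concat A) = concat B'" using B(2) by (auto simp: append_eq_append_conv)
  then show ?case using Cons.IH B by simp
qed

lemma exists_Sinf_map:
  "distinct xs \<Longrightarrow> distinct ys \<Longrightarrow> length xs = length ys \<Longrightarrow> \<exists>g\<in>S_inf. map g xs = ys"
proof (induction xs arbitrary: ys)
  case Nil then show ?case using Sinf_id by auto
next
  case (Cons x xs)
  then obtain y ys' where ys: "ys = y # ys'" by (cases ys) auto
  then obtain g0 where g0: "g0 \<in> S_inf" "map g0 xs = ys'" using Cons by auto
  define g where "g = Transposition.transpose y (g0 x) \<circ> g0"
  have gS: "g \<in> S_inf" unfolding g_def by (intro Sinf_comp Sinf_transpose g0(1))
  have "g x = y" by (simp add: g_def)
  moreover have "map g xs = ys'"
  proof (rule nth_equalityI)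
    show "length (map g xs) = length ys'" using g0(2) by auto
    fix i assume i: "i < length (map g xs)"
    have e: "g0 (xs ! i) = ys' ! i" using g0(2) i by (metis length_map nth_map)
    have "ys' ! i \<noteq> y" using Cons.prems(2) ys i g0(2) by (metis distinct.simps(2) length_map nth_mem)
    moreover have "g0 (xs ! i) \<noteq> g0 x"
    proof
      assume "g0 (xs ! i) = g0 x"
      then have "xs ! i = x" using Sinf_bij[OF g0(1)] by (simp add: bij_is_inj inj_eq)
      then show False using Cons.prems(1) i by (metis distinct.simps(2) length_map nth_mem)
    qed
    ultimately show "map g xs ! i = ys' ! i" using i e by (simp add: g_def Transposition.transpose_def)
  qed
  ultimately show ?case using gS ys by auto
qed

lemma conj_prodL:
  assumes v1: "validL L1" and v2: "validL L2" and m: "mset (map length L1) = mset (map length L2)"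
  shows "\<exists>g\<in>S_inf. prodL L1 = g \<circ> prodL L2 \<circ> inv g"
proof -
  obtain L2' where L2': "mset L2' = mset L2" "map length L2' = map length L1" using reorder[OF m] by blast
  have v2': "validL L2'" using validL_mset[OF v2 L2'(1)] .
  have pe: "prodL L2' = prodL L2" using prodL_set_eq[OF v2' v2] L2'(1) by (metis set_mset_mset)
  have len: "length (concat L2') = length (concat L1)" using L2'(2) by (simp add: length_concat)
  obtain g where g: "g \<in> S_inf" "map g (concat L2') = concat L1"
    using exists_Sinf_map[OF _ _ len] v1 v2' by (auto simp: validL_def)
  have "map (map g) L2' = L1" by (rule map_map_concat[OF L2'(2) g(2)])
  then have "prodL L1 = g \<circ> prodL L2' \<circ> inv g"
    using prodL_conj[OF Sinf_bij[OF g(1)]] v2' validL_distinct by metis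
  then show ?thesis using g(1) pe by auto
qed

lemma Sinf_conjugate:
  assumes s: "s \<in> S_inf" and s': "s' \<in> S_inf" and nc: "\<forall>k\<ge>2. num_cycles s k = num_cycles s' k"
  shows "conjugate s s'"
proof -
  obtain L1 where L1: "validL L1" "s = prodL L1" using Sinf_decomp[OF s] by blast
  obtain L2 where L2: "validL L2" "s' = prodL L2" using Sinf_decomp[OF s'] by blast
  have "mset (map length L1) = mset (map length L2)"
  proof (rule multiset_eqI)
    fix k
    show "count (mset (map length L1)) k = count (mset (map length L2)) k"
    proof (cases "k \<ge> 2")
      case True
      then show ?thesis using nc num_cycles_prodL L1 L2 by metis
    next
      case False
      have "count (mset (map length L1)) k = 0" "count (mset (map length L2)) k = 0"
        using L1(1) L2(1) False by (auto simp: validL_def count_eq_zero_iff)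
      then show ?thesis by simp
    qed
  qed
  then show ?thesis using conj_prodL[OF L1(1) L2(1)] L1 L2 by (simp add: conjugate_def)
qed

lemma conjugate_iff:
  assumes h: "h \<in> S_inf" and s: "s = h \<circ> s' \<circ> inv h"
  shows "conjugate s t \<longleftrightarrow> conjugate s' t"
proof
  have bh: "bij h" using Sinf_bij[OF h] .
  assume "conjugate s t"
  then obtain g where g: "g \<in> S_inf" "s = g \<circ> t \<circ> inv g" by (auto simp: conjugate_def)
  have bg: "bij g" using Sinf_bij[OF g(1)] .
  have "s' = inv h \<circ> s \<circ> h"
    using bh s by (simp add: o_assoc bij_is_inj bij_is_surj surj_iff)
  also have "\<dots> = (inv h \<circ> g) \<circ> t \<circ> inv (inv h \<circ> g)"
    using bh bg g(2) by (simp add: o_inv_distrib bij_imp_bij_inv inv_inv_eq o_assoc)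
  finally show "conjugate s' t" using g(1) h by (auto simp: conjugate_def intro!: Sinf_comp Sinf_inv)
next
  have bh: "bij h" using Sinf_bij[OF h] .
  assume "conjugate s' t"
  then obtain g where g: "g \<in> S_inf" "s' = g \<circ> t \<circ> inv g" by (auto simp: conjugate_def)
  have bg: "bij g" using Sinf_bij[OF g(1)] .
  have "s = (h \<circ> g) \<circ> t \<circ> inv (h \<circ> g)"
    using bh bg g(2) s by (simp add: o_inv_distrib o_assoc)
  then show "conjugate s t" using g(1) h by (auto simp: conjugate_def intro!: Sinf_comp)
qed

lemma Mrho_conj:
  assumes "conjugate s s'"
  shows "Mrho n rho s = Mrho n rho s'"
proof -
  obtain h where h: "h \<in> S_inf" "s = h \<circ> s' \<circ> inv h" using assms by (auto simp: conjugate_def)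
  have "conjugate s = conjugate s'" using conjugate_iff[OF h] by (intro ext) simp
  then show ?thesis unfolding Mrho_def by (simp only:)
qed



definition Wm :: "nat multiset \<Rightarrow> real" where
  "Wm a = (\<Prod>k\<in>set_mset a. fact (count a k))"

definition aS :: "(nat \<Rightarrow> nat) \<Rightarrow> nat set \<Rightarrow> nat multiset" where
  "aS h S = image_mset h (mset_set S)"

definition LF :: "mps \<Rightarrow> (nat \<Rightarrow> nat) \<Rightarrow> nat set \<Rightarrow> real" where
  "LF F h S = Wm (aS h S) * F (aS h S)"

lemma finite_submsets: "finite {b. b \<subseteq># (a::'a multiset)}"
proof (rule finite_subset)
  show "{b. b \<subseteq># a} \<subseteq> (\<Union>m\<in>{..size a}. multisets_of_size (set_mset a) m)"
    by (auto simp: multisets_of_size_def size_mset_mono mset_subset_eqD)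
  show "finite (\<Union>m\<in>{..size a}. multisets_of_size (set_mset a) m)" by auto
qed

lemma Wm_empty[simp]: "Wm {#} = 1" by (simp add: Wm_def)

lemma Wm_add: "Wm (add_mset k c) = Wm c * (real (count c k) + 1)"
proof (cases "k \<in># c")
  case True
  have "Wm (add_mset k c) = (\<Prod>j\<in>set_mset c. fact (count (add_mset k c) j))"
    using True by (simp add: Wm_def insert_absorb)
  also have "\<dots> = fact (count (add_mset k c) k) * (\<Prod>j\<in>set_mset c - {k}. fact (count (add_mset k c) j))"
    using True by (simp add: prod.remove)
  also have "(\<Prod>j\<in>set_mset c - {k}. fact (count (add_mset k c) j)) = (\<Prod>j\<in>set_mset c - {k}. fact (count c j))"
    by (rule prod.cong) auto
  also have "Wm c = fact (count c k) * (\<Prod>j\<in>set_mset c - {k}. fact (count c j))"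
    using True by (simp add: Wm_def prod.remove)
  ultimately show ?thesis by (simp add: algebra_simps)
next
  case False
  have "Wm (add_mset k c) = fact (count (add_mset k c) k) * (\<Prod>j\<in>set_mset c. fact (count (add_mset k c) j))"
    using False by (simp add: Wm_def)
  also have "(\<Prod>j\<in>set_mset c. fact (count (add_mset k c) j)) = Wm c"
    unfolding Wm_def by (rule prod.cong) (use False in auto)
  finally show ?thesis using False by (simp add: not_in_iff)
qed

lemma Wm_pos: "Wm a > 0" by (simp add: Wm_def prod_pos)

definition NB :: "(nat \<Rightarrow> nat) \<Rightarrow> nat set \<Rightarrow> nat multiset \<Rightarrow> nat" where
  "NB h S b = card {B. B \<subseteq> S \<and> aS h B = b}"

lemma aS_insert: "finite S \<Longrightarrow> x \<notin> S \<Longrightarrow> aS h (insert x S) = add_mset (h x) (aS h S)"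
  by (simp add: aS_def)

lemma aS_mono: "finite S \<Longrightarrow> B \<subseteq> S \<Longrightarrow> aS h B \<subseteq># aS h S"
  unfolding aS_def by (intro image_mset_subseteq_mono) (simp add: subset_imp_msubset_mset_set)

lemma aS_diff: "finite S \<Longrightarrow> B \<subseteq> S \<Longrightarrow> aS h (S - B) = aS h S - aS h B"
  unfolding aS_def by (simp add: mset_set_Diff image_mset_Diff subset_imp_msubset_mset_set)

lemma aS_empty_iff: "finite S \<Longrightarrow> aS h S = {#} \<longleftrightarrow> S = {}"
  by (simp add: aS_def mset_set_empty_iff)

lemma NB_zero: "finite S \<Longrightarrow> \<not> b \<subseteq># aS h S \<Longrightarrow> NB h S b = 0"
proof -
  assume a1: "finite S" and a2: "\<not> b \<subseteq># aS h S"
  have "{B. B \<subseteq> S \<and> aS h B = b} = {}" using aS_mono[OF a1] a2 by blast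
  then show ?thesis by (simp only: NB_def card.empty)
qed

lemma NB_insert_split:
  assumes "finite S" "x \<notin> S"
  shows "{B. B \<subseteq> insert x S \<and> aS h B = b} =
     {B. B \<subseteq> S \<and> aS h B = b} \<union> {B. \<exists>B'. B = insert x B' \<and> B' \<subseteq> S \<and> h x \<in># b \<and> aS h B' = b - {#h x#}}"
    (is "?L = ?R")
proof (intro equalityI subsetI)
  fix B assume B: "B \<in> ?L"
  show "B \<in> ?R"
  proof (cases "x \<in> B")
    case False
    then have "B \<subseteq> S" using B by blast
    then show ?thesis using B by blast
  next
    case True
    have sub: "B - {x} \<subseteq> S" using B by blast
    have fin: "finite (B - {x})" using sub assms(1) finite_subset by blast
    have Bx: "B = insert x (B - {x})" using True by blast
    have "aS h B = add_mset (h x) (aS h (B - {x}))"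
      using aS_insert[OF fin, of x h] Bx by simp
    then have bb: "b = add_mset (h x) (aS h (B - {x}))" using B by simp
    then have "h x \<in># b" "aS h (B - {x}) = b - {#h x#}" by simp_all
    then show ?thesis using Bx sub by blast
  qed
next
  fix B assume B: "B \<in> ?R"
  show "B \<in> ?L"
  proof (cases "B \<in> {B. B \<subseteq> S \<and> aS h B = b}")
    case True then show ?thesis by blast
  next
    case False
    then obtain B' where B': "h x \<in># b" "B = insert x B'" "B' \<subseteq> S" "aS h B' = b - {#h x#}"
      using B by blast
    have "x \<notin> B'" using B' assms by blast
    then have "aS h B = add_mset (h x) (aS h B')"
      using B' aS_insert[of B' x h] assms(1) finite_subset[of B' S] by simp
    then have "aS h B = b" using B' by simp
    then show ?thesis using B' by blast
  qed
qed

lemma NB_insert: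
  assumes "finite S" "x \<notin> S"
  shows "NB h (insert x S) b = NB h S b + (if h x \<in># b then NB h S (b - {#h x#}) else 0)"
proof -
  let ?C = "{B. \<exists>B'. B = insert x B' \<and> B' \<subseteq> S \<and> h x \<in># b \<and> aS h B' = b - {#h x#}}"
  have fin1: "finite {B. B \<subseteq> S \<and> aS h B = c}" for c
    by (rule finite_subset[of _ "Pow S"]) (use assms(1) in auto)
  have disj: "{B. B \<subseteq> S \<and> aS h B = b} \<inter> ?C = {}"
    using assms(2) by blast
  have C: "?C = (if h x \<in># b then insert x ` {B. B \<subseteq> S \<and> aS h B = b - {#h x#}} else {})"
    by (cases "h x \<in># b") auto
  have inj: "inj_on (insert x) {B. B \<subseteq> S \<and> aS h B = b - {#h x#}}"
    using assms(2) by (intro inj_onI) (metis insert_ident mem_Collect_eq subsetD)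
  have finC: "finite ?C" unfolding C using fin1 by simp
  have "NB h (insert x S) b = card {B. B \<subseteq> S \<and> aS h B = b} + card ?C"
    unfolding NB_def NB_insert_split[OF assms] by (rule card_Un_disjoint[OF fin1 finC disj])
  also have "card ?C = (if h x \<in># b then NB h S (b - {#h x#}) else 0)"
    unfolding C NB_def using card_image[OF inj] by simp
  finally show ?thesis unfolding NB_def by simp
qed

lemma F1: "(b::'a multiset) \<subseteq># add_mset k a' \<Longrightarrow> k \<notin># b \<Longrightarrow> b \<subseteq># a'"
  by (metis Diff_eq_empty_iff_mset minus_add_mset_if_not_in_lhs)
lemma F2: "(b::'a multiset) \<subseteq># a' \<Longrightarrow> add_mset k a' - b = add_mset k (a' - b)"
  by (metis add_mset_add_single mset_subset_eq_multiset_union_diff_commute)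
lemma F3: "k \<in># (b::'a multiset) \<Longrightarrow> add_mset k a' - b = a' - (b - {#k#})"
  by (metis add_mset_diff_bothsides insert_DiffM)
lemma F4: "(b::'a multiset) \<subseteq># add_mset k a' \<Longrightarrow> k \<in># b \<Longrightarrow> b - {#k#} \<subseteq># a'"
  by (metis insert_DiffM add_mset_remove_trivial insert_subset_eq_iff)
lemma F5: assumes "(b::'a multiset) \<subseteq># add_mset k a'" "\<not> b \<subseteq># a'"
  shows "count b k = count a' k + 1"
proof -
  obtain y where y: "count b y > count a' y" using assms(2) by (meson leI subseteq_mset_def)
  have "count b y \<le> count (add_mset k a') y" using assms(1) by (simp add: subseteq_mset_def)
  then have "y = k" using y by (auto split: if_splits)
  have "count b k \<le> count a' k + 1" using assms(1) by (metis count_add_mset subseteq_mset_def Suc_eq_plus1)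
  then show ?thesis using y \<open>y = k\<close> by simp
qed

lemma NB_count:
  assumes "finite S"
  shows "real (NB h S b) * Wm b * Wm (aS h S - b) = (if b \<subseteq># aS h S then Wm (aS h S) else 0)"
  using assms
proof (induction S arbitrary: b rule: finite_induct)
  case empty
  show ?case
  proof (cases "b = {#}")
    case True
    have "{B. B \<subseteq> {} \<and> aS h B = b} = {{}}" using True by (auto simp: aS_def)
    then show ?thesis using True by (simp add: NB_def aS_def)
  next
    case False
    have "{B. B \<subseteq> {} \<and> aS h B = b} = {}" using False by (auto simp: aS_def)
    then show ?thesis using False by (simp add: NB_def aS_def)
  qed
next
  case (insert x S)
  let ?k = "h x"
  define a' where "a' = aS h S"
  have IH: "real (NB h S c) * Wm c * Wm (a' - c) = (if c \<subseteq># a' then Wm a' else 0)" for c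
    using insert.IH unfolding a'_def by simp
  have a: "aS h (insert x S) = add_mset ?k a'" unfolding a'_def using aS_insert insert by auto
  have NBi: "NB h (insert x S) c = NB h S c + (if h x \<in># c then NB h S (c - {#h x#}) else 0)" for c
    using NB_insert[OF insert(1,2)] by simp
  show ?case
  proof (cases "b \<subseteq># aS h (insert x S)")
    case False then show ?thesis using NB_zero insert by auto
  next
    case sub: True
    hence sub': "b \<subseteq># add_mset ?k a'" using a by simp
    show ?thesis
    proof (cases "?k \<in># b")
      case False
      have ba': "b \<subseteq># a'" using sub' False F1 by metis
      have d: "add_mset ?k a' - b = add_mset ?k (a' - b)" using F2[OF ba'] .
      have cnt: "count (a' - b) ?k = count a' ?k" using False by (simp add: not_in_iff)
      note count_diff[simp del]
      have "real (NB h (insert x S) b) * Wm b * Wm (aS h (insert x S) - b)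
          = real (NB h S b) * Wm b * Wm (a' - b) * (real (count a' ?k) + 1)"
        using False by (simp add: NBi a d Wm_add cnt)
      also have "\<dots> = Wm a' * (real (count a' ?k) + 1)" using IH[of b] ba' by simp
      also have "\<dots> = Wm (aS h (insert x S))" by (simp add: a Wm_add)
      finally show ?thesis using sub by simp
    next
      case True
      define b' where "b' = b - {#?k#}"
      have bb: "b = add_mset ?k b'" unfolding b'_def using True by simp
      have b'a: "b' \<subseteq># a'" unfolding b'_def using F4[OF sub' True] .
      have d2: "add_mset ?k a' - b = a' - b'" unfolding b'_def using F3[OF True] .
      have t2: "real (NB h S b') * Wm b * Wm (add_mset ?k a' - b) = Wm a' * (real (count b' ?k) + 1)"
        using IH[of b'] b'a by (simp add: bb Wm_add d2[unfolded bb])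
      have t1: "real (NB h S b) * Wm b * Wm (add_mset ?k a' - b) = Wm a' * (real (count a' ?k) + 1 - real (count b ?k))"
      proof (cases "b \<subseteq># a'")
        case True
        have d: "add_mset ?k a' - b = add_mset ?k (a' - b)" using F2[OF True] .
        have le: "count b ?k \<le> count a' ?k" using True by (simp add: subseteq_mset_def)
        have "real (NB h S b) * Wm b * Wm (add_mset ?k a' - b) = real (NB h S b) * Wm b * Wm (a' - b) * (real (count (a' - b) ?k) + 1)"
          by (simp add: d Wm_add)
        also have "\<dots> = Wm a' * (real (count (a' - b) ?k) + 1)" using IH[of b] True by simp
        finally show ?thesis using le by (simp add: of_nat_diff)
      next
        case False
        have "real (NB h S b) * Wm b * Wm (a' - b) = 0" using IH[of b] False by simp
        then have "NB h S b = 0" using Wm_pos[of b] Wm_pos[of "a' - b"] by simp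
        moreover have "count b ?k = count a' ?k + 1" using F5[OF sub' False] .
        ultimately show ?thesis by simp
      qed
      have "real (NB h (insert x S) b) * Wm b * Wm (aS h (insert x S) - b)
        = real (NB h S b) * Wm b * Wm (add_mset ?k a' - b) + real (NB h S b') * Wm b * Wm (add_mset ?k a' - b)"
        using True by (simp add: NBi a b'_def algebra_simps)
      also have "\<dots> = Wm a' * (real (count a' ?k) + 1)"
        using t1 t2 by (simp add: bb algebra_simps)
      also have "\<dots> = Wm (aS h (insert x S))" by (simp add: a Wm_add)
      finally show ?thesis using sub by simp
    qed
  qed
qed


lemma LF_mult:
  assumes fin: "finite S"
  shows "LF (mps_mult F G) h S = (\<Sum>B\<in>Pow S. LF F h B * LF G h (S - B))"
proof -
  define a where "a = aS h S"
  define g where "g b = Wm b * F b * (Wm (a - b) * G (a - b))" for b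
  have finT: "finite {b. b \<subseteq># a}" by (rule finite_submsets)
  have "LF (mps_mult F G) h S = (\<Sum>b\<in>{b. b \<subseteq># a}. Wm a * (F b * G (a - b)))"
    by (simp add: LF_def mps_mult_def a_def sum_distrib_left)
  also have "\<dots> = (\<Sum>b\<in>{b. b \<subseteq># a}. real (NB h S b) * g b)"
  proof (rule sum.cong[OF refl])
    fix b assume "b \<in> {b. b \<subseteq># a}"
    then have "real (NB h S b) * Wm b * Wm (a - b) = Wm a" using NB_count[OF fin, of h b] by (simp add: a_def)
    then show "Wm a * (F b * G (a - b)) = real (NB h S b) * g b"
      unfolding g_def by (metis (no_types, lifting) mult.assoc mult.left_commute)
  qed
  also have "\<dots> = (\<Sum>b\<in>{b. b \<subseteq># a}. sum (\<lambda>B. g (aS h B)) {B \<in> Pow S. aS h B = b})"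
  proof (rule sum.cong[OF refl])
    fix b
    have "sum (\<lambda>B. g (aS h B)) {B \<in> Pow S. aS h B = b} = sum (\<lambda>B. g b) {B \<in> Pow S. aS h B = b}"
      by (rule sum.cong) auto
    also have "\<dots> = real (card {B \<in> Pow S. aS h B = b}) * g b" by simp
    also have "{B \<in> Pow S. aS h B = b} = {B. B \<subseteq> S \<and> aS h B = b}" by auto
    finally show "real (NB h S b) * g b = sum (\<lambda>B. g (aS h B)) {B \<in> Pow S. aS h B = b}"
      by (simp add: NB_def)
  qed
  also have "\<dots> = (\<Sum>B\<in>Pow S. g (aS h B))"
    by (rule sum.group) (use fin finT aS_mono[OF fin] in \<open>auto simp: a_def\<close>)
  also have "\<dots> = (\<Sum>B\<in>Pow S. LF F h B * LF G h (S - B))"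
  proof (rule sum.cong[OF refl])
    fix B assume "B \<in> Pow S"
    then have "aS h (S - B) = a - aS h B" using aS_diff[OF fin] by (simp add: a_def)
    then show "g (aS h B) = LF F h B * LF G h (S - B)" by (simp add: g_def LF_def)
  qed
  finally show ?thesis .
qed

definition Tpart :: "(nat set \<Rightarrow> real) \<Rightarrow> nat \<Rightarrow> nat set \<Rightarrow> real" where
  "Tpart f m S = (\<Sum>P\<in>{P. partition_on S P \<and> card P = m}. \<Prod>B\<in>P. f B)"

lemma Tpart_0: "finite S \<Longrightarrow> Tpart f 0 S = (if S = {} then 1 else 0)"
proof -
  assume fin: "finite S"
  have "{P. partition_on S P \<and> card P = 0} = (if S = {} then {{}} else {})"
  proof (cases "S = {}")
    case True then show ?thesis by (auto simp: partition_on_empty)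
  next
    case False
    have "\<not> (partition_on S P \<and> card P = 0)" for P
    proof
      assume "partition_on S P \<and> card P = 0"
      then have "P = {}" using finite_elements[OF fin] by auto
      then show False using False \<open>partition_on S P \<and> card P = 0\<close> by (auto simp: partition_on_def)
    qed
    then show ?thesis using False by auto
  qed
  then show ?thesis by (simp add: Tpart_def)
qed

lemma partition_remove_block:
  assumes "partition_on S P" "B \<in> P"
  shows "partition_on (S - B) (P - {B})"
proof -
  have "disjnt B (\<Union>(P - {B}))" using assms partition_onD2[OF assms(1)]
    by (auto simp: disjnt_def pairwise_def disjoint_def)
  moreover have "insert B (P - {B}) = P" using assms(2) by auto
  ultimately show ?thesis using partition_on_insert[of B "P - {B}" S] assms(1) by simp
qed

lemma partition_add_block:
  assumes "partition_on (S - B) P" "B \<subseteq> S" "B \<noteq> {}"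
  shows "partition_on S (insert B P)" "B \<notin> P"
proof -
  have "disjnt B (\<Union>P)" using partition_onD1[OF assms(1)] by (auto simp: disjnt_def)
  then show "partition_on S (insert B P)" using partition_on_insert assms by blast
  show "B \<notin> P" using partition_onD1[OF assms(1)] assms(2,3) by blast
qed

lemma Tpart_Suc:
  assumes fin: "finite S"
  shows "(\<Sum>B\<in>Pow S - {{}}. f B * Tpart f m (S - B)) = real (Suc m) * Tpart f (Suc m) S"
proof -
  define PS where "PS = {P. partition_on S P \<and> card P = Suc m}"
  define Q where "Q B = {P. partition_on (S - B) P \<and> card P = m}" for B
  have finQ: "finite (Q B)" for B
    unfolding Q_def by (rule finite_subset[OF _ finitely_many_partition_on[of "S - B"]]) (use fin in auto)
  have finPS: "finite PS"
    unfolding PS_def by (rule finite_subset[OF _ finitely_many_partition_on[of "S"]]) (use fin in auto)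
  have finP: "P \<in> PS \<Longrightarrow> finite P" for P unfolding PS_def using finite_elements[OF fin] by auto
  have "(\<Sum>B\<in>Pow S - {{}}. f B * Tpart f m (S - B)) = (\<Sum>B\<in>Pow S - {{}}. \<Sum>P\<in>Q B. f B * prod f P)"
    by (simp add: Tpart_def Q_def sum_distrib_left)
  also have "\<dots> = (\<Sum>(B, P)\<in>Sigma (Pow S - {{}}) Q. f B * prod f P)"
    by (rule sum.Sigma) (use fin finQ in auto)
  also have "\<dots> = (\<Sum>(P, B)\<in>Sigma PS (\<lambda>P. P). f B * prod f (P - {B}))"
  proof -
    have bij: "bij_betw (\<lambda>(P, B). (B, P - {B})) (Sigma PS (\<lambda>P. P)) (Sigma (Pow S - {{}}) Q)"
    proof (rule bij_betw_byWitness[where f' = "\<lambda>(B, P). (insert B P, B)"])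
      show "\<forall>a\<in>Sigma PS (\<lambda>P. P). (\<lambda>(B, P). (insert B P, B)) ((\<lambda>(P, B). (B, P - {B})) a) = a"
        by auto
      show "\<forall>a'\<in>Sigma (Pow S - {{}}) Q. (\<lambda>(P, B). (B, P - {B})) ((\<lambda>(B, P). (insert B P, B)) a') = a'"
      proof
        fix a' assume "a' \<in> Sigma (Pow S - {{}}) Q"
        then obtain B P where a0: "a' = (B, P)" "B \<in> Pow S - {{}}" "P \<in> Q B" by blast
        then have a': "a' = (B, P)" "B \<subseteq> S" "B \<noteq> {}" "partition_on (S - B) P" by (auto simp: Q_def)
        then have "B \<notin> P" using partition_add_block by blast
        then show "(\<lambda>(P, B). (B, P - {B})) ((\<lambda>(B, P). (insert B P, B)) a') = a'" using a' by auto
      qed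
      show "(\<lambda>(P, B). (B, P - {B})) ` Sigma PS (\<lambda>P. P) \<subseteq> Sigma (Pow S - {{}}) Q"
      proof
        fix y assume "y \<in> (\<lambda>(P, B). (B, P - {B})) ` Sigma PS (\<lambda>P. P)"
        then obtain P B where y: "y = (B, P - {B})" "P \<in> PS" "B \<in> P" by auto
        have pp: "partition_on S P" "card P = Suc m" using y(2) by (auto simp: PS_def)
        have "B \<subseteq> S" "B \<noteq> {}" using pp(1) y(3) by (auto simp: partition_on_def)
        moreover have "partition_on (S - B) (P - {B})" using partition_remove_block[OF pp(1) y(3)] .
        moreover have "card (P - {B}) = m" using pp(2) y(3) finP[OF y(2)] by simp
        ultimately show "y \<in> Sigma (Pow S - {{}}) Q" using y(1) by (auto simp: Q_def)
      qed
      show "(\<lambda>(B, P). (insert B P, B)) ` Sigma (Pow S - {{}}) Q \<subseteq> Sigma PS (\<lambda>P. P)"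
      proof
        fix y assume "y \<in> (\<lambda>(B, P). (insert B P, B)) ` Sigma (Pow S - {{}}) Q"
        then obtain z where z: "z \<in> Sigma (Pow S - {{}}) Q" "y = (\<lambda>(B, P). (insert B P, B)) z" by blast
        obtain B P where "z = (B, P)" by fastforce
        then have y0: "y = (insert B P, B)" "B \<in> Pow S - {{}}" "P \<in> Q B" using z by auto
        then have y: "y = (insert B P, B)" "B \<subseteq> S" "B \<noteq> {}" "partition_on (S - B) P" "card P = m"
          by (auto simp: Q_def)
        have "finite P" using finite_elements[OF _ y(4)] fin by auto
        then show "y \<in> Sigma PS (\<lambda>P. P)" using partition_add_block[OF y(4,2,3)] y
          by (auto simp: PS_def)
      qed
    qed
    have "(\<Sum>(B, P)\<in>Sigma (Pow S - {{}}) Q. f B * prod f P) =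
      (\<Sum>x\<in>Sigma PS (\<lambda>P. P). (\<lambda>(B, P). f B * prod f P) ((\<lambda>(P, B). (B, P - {B})) x))"
      by (rule sum.reindex_bij_betw[OF bij, symmetric])
    also have "\<dots> = (\<Sum>(P, B)\<in>Sigma PS (\<lambda>P. P). f B * prod f (P - {B}))"
      by (rule sum.cong) auto
    finally show ?thesis .
  qed
  also have "\<dots> = (\<Sum>P\<in>PS. \<Sum>B\<in>P. f B * prod f (P - {B}))"
    by (rule sum.Sigma[symmetric]) (use finPS finP in auto)
  also have "\<dots> = (\<Sum>P\<in>PS. real (Suc m) * prod f P)"
  proof (rule sum.cong[OF refl])
    fix P assume P: "P \<in> PS"
    have "(\<Sum>B\<in>P. f B * prod f (P - {B})) = (\<Sum>B\<in>P. prod f P)"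
      by (rule sum.cong[OF refl]) (use finP[OF P] prod.remove in metis)
    also have "\<dots> = real (Suc m) * prod f P" using P by (simp add: PS_def)
    finally show "(\<Sum>B\<in>P. f B * prod f (P - {B})) = real (Suc m) * prod f P" .
  qed
  also have "\<dots> = real (Suc m) * Tpart f (Suc m) S"
    by (simp add: Tpart_def PS_def sum_distrib_left)
  finally show ?thesis .
qed

lemma LF_pow:
  assumes fin: "finite S" and U0: "U {#} = 0"
  shows "LF (mps_pow U m) h S = fact m * Tpart (LF U h) m S"
  using fin
proof (induction m arbitrary: S)
  case 0
  then show ?case
    by (simp add: LF_def Tpart_0 aS_empty_iff) (simp add: aS_def)
next
  case (Suc m)
  have "LF (mps_pow U (Suc m)) h S = (\<Sum>B\<in>Pow S. LF U h B * LF (mps_pow U m) h (S - B))"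
    by (simp add: LF_mult[OF Suc.prems])
  also have "\<dots> = (\<Sum>B\<in>Pow S - {{}}. LF U h B * LF (mps_pow U m) h (S - B))"
    by (rule sum.mono_neutral_right) (use Suc.prems U0 in \<open>auto simp: LF_def aS_def\<close>)
  also have "\<dots> = fact m * (\<Sum>B\<in>Pow S - {{}}. LF U h B * Tpart (LF U h) m (S - B))"
    by (simp add: Suc.IH Suc.prems sum_distrib_left algebra_simps)
  also have "\<dots> = fact (Suc m) * Tpart (LF U h) (Suc m) S"
    by (simp add: Tpart_Suc[OF Suc.prems])
  finally show ?case .
qed


lemma partition_card_le:
  assumes fin: "finite S" and P: "partition_on S P"
  shows "card P \<le> card S"
proof -
  have finP: "finite P" using finite_elements[OF fin P] .
  have "card S = sum card P"
    using partition_onD1[OF P] partition_onD2[OF P] card_Union_disjoint[of P] fin P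
    by (metis Union_upper finite_subset disjoint_def)
  also have "\<dots> \<ge> sum (\<lambda>_. 1) P"
  proof (rule sum_mono)
    fix B assume "B \<in> P"
    then have "B \<noteq> {}" "finite B" using partition_onD3[OF P] partition_onD1[OF P] fin
      by (auto intro: finite_subset)
    then show "1 \<le> card B" by (simp add: Suc_leI card_gt_0_iff)
  qed
  finally show ?thesis by simp
qed

lemma partition_card_pos:
  assumes fin: "finite S" and P: "partition_on S P" and "S \<noteq> {}"
  shows "card P \<ge> 1"
proof -
  have "P \<noteq> {}" using partition_onD1[OF P] assms(3) by auto
  then show ?thesis using finite_elements[OF fin P] by (simp add: Suc_leI card_gt_0_iff)
qed

lemma aS_all: "aS (\<lambda>i. js ! i) {..<length js} = mset js"
  unfolding aS_def mset_set_upto_eq_mset_upto by (metis mset_map map_nth)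

lemma deriv0_ln:
  assumes ne: "js \<noteq> []"
  shows "deriv0 (mps_ln A) js =
    (\<Sum>P\<in>{P. partition_on {..<length js} P}. (-1) ^ (card P - 1) * fact (card P - 1) * (\<Prod>B\<in>P. LF A (\<lambda>i. js ! i) B))"
proof -
  define r where "r = length js"
  define S where "S = {..<r}"
  define h where "h = (\<lambda>i. js ! i)"
  define U where "U = (\<lambda>b. if b = {#} then 0 else A b)"
  have finS: "finite S" by (simp add: S_def)
  have Sne: "S \<noteq> {}" using ne by (metis S_def r_def length_greater_0_conv lessThan_iff empty_iff)
  have a: "aS h S = mset js" by (simp add: aS_all S_def h_def r_def)
  have U0: "U {#} = 0" by (simp add: U_def)
  have LFU: "LF U h B = LF A h B" if "B \<subseteq> S" "B \<noteq> {}" for B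
  proof -
    have "aS h B \<noteq> {#}" using that finS aS_empty_iff[of B h] finite_subset by blast
    then show ?thesis by (simp add: LF_def U_def)
  qed
  have Teq: "Tpart (LF U h) m S = Tpart (LF A h) m S" for m
    unfolding Tpart_def
  proof (rule sum.cong[OF refl], rule prod.cong[OF refl])
    fix P B assume "P \<in> {P. partition_on S P \<and> card P = m}" "B \<in> P"
    then show "LF U h B = LF A h B" using LFU by (auto simp: partition_on_def)
  qed
  have "deriv0 (mps_ln A) js = Wm (mset js) * mps_ln A (mset js)"
    by (simp add: deriv0_def Wm_def)
  also have "\<dots> = (\<Sum>m\<in>{1..r}. (-1) ^ (m - 1) / real m * LF (mps_pow U m) h S)"
    by (simp add: mps_ln_def Let_def U_def[symmetric] LF_def a sum_distrib_left r_def algebra_simps)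
  also have "\<dots> = (\<Sum>m\<in>{1..r}. (-1) ^ (m - 1) * fact (m - 1) * Tpart (LF A h) m S)"
  proof (rule sum.cong[OF refl])
    fix m assume m: "m \<in> {1..r}"
    have "fact m = real m * fact (m - 1)" using m by (metis fact_nonzero fact_num_eq_if le_numeral_extra(2) of_nat_1 of_nat_fact atLeastAtMost_iff not_one_le_zero)
    then show "(-1) ^ (m - 1) / real m * LF (mps_pow U m) h S = (-1) ^ (m - 1) * fact (m - 1) * Tpart (LF A h) m S"
      using m by (simp add: LF_pow[where U=U, OF finS U0] Teq)
  qed
  also have "\<dots> = (\<Sum>m\<in>{1..r}. \<Sum>P\<in>{P \<in> {P. partition_on S P}. card P = m}. (-1) ^ (card P - 1) * fact (card P - 1) * (\<Prod>B\<in>P. LF A h B))"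
    by (rule sum.cong[OF refl]) (simp add: Tpart_def sum_distrib_left conj_commute)
  also have "\<dots> = (\<Sum>P\<in>{P. partition_on S P}. (-1) ^ (card P - 1) * fact (card P - 1) * (\<Prod>B\<in>P. LF A h B))"
  proof (rule sum.group)
    show "finite {P. partition_on S P}" using finitely_many_partition_on[OF finS] .
    show "card ` {P. partition_on S P} \<subseteq> {1..r}"
      using partition_card_le[OF finS] partition_card_pos[OF finS _ Sne] by (auto simp: S_def)
  qed simp
  finally show ?thesis by (simp add: S_def h_def r_def)
qed




lemma supp_cycle: "distinct c \<Longrightarrow> length c \<ge> 2 \<Longrightarrow> supp (cycle_of_list c) = set c"
proof (intro equalityI subsetI)
  fix x assume d: "distinct c" and l: "length c \<ge> 2" and x: "x \<in> supp (cycle_of_list c)"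
  then show "x \<in> set c" using id_outside_supp by (fastforce simp: supp_def)
next
  fix x assume d: "distinct c" and l: "length c \<ge> 2" and x: "x \<in> set c"
  show "x \<in> supp (cycle_of_list c)"
  proof (rule ccontr)
    assume "x \<notin> supp (cycle_of_list c)"
    then have "cycle_of_list c x = x" by (simp add: supp_def)
    then have "orbit (cycle_of_list c) x = {x}" by (simp add: orbit_eq_singleton_iff)
    then have "set c = {x}" using orbit_cycle[OF d x] by simp
    then have "card (set c) = 1" by simp
    then show False using d l by (simp add: distinct_card)
  qed
qed


lemma sum_count_aS:
  assumes fin: "finite B"
  shows "(\<Sum>k\<in>set_mset (aS h B). count (aS h B) k * f k) = (\<Sum>i\<in>B. f (h i))"
proof -
  have sm: "set_mset (aS h B) = h ` B" using fin by (simp add: aS_def finite_set_mset_mset_set)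
  have "(\<Sum>k\<in>set_mset (aS h B). count (aS h B) k * f k) = (\<Sum>k\<in>h ` B. \<Sum>i\<in>{i \<in> B. h i = k}. f (h i))"
  proof (rule sum.cong[OF sm])
    fix k assume "k \<in> h ` B"
    have "count (aS h B) k = card {i \<in> B. h i = k}"
      using fin by (simp add: aS_def count_image_mset_eq_card_vimage)
    moreover have "(\<Sum>i\<in>{i \<in> B. h i = k}. f (h i)) = (\<Sum>i\<in>{i \<in> B. h i = k}. f k)" by (rule sum.cong) auto
    ultimately show "count (aS h B) k * f k = (\<Sum>i\<in>{i \<in> B. h i = k}. f (h i))" by simp
  qed
  also have "\<dots> = (\<Sum>i\<in>B. f (h i))"
    by (rule sum.group) (use fin in auto)
  finally show ?thesis .
qed

lemma LF_young:
  assumes fin: "finite B" and pos: "\<forall>i\<in>B. h i \<ge> 1" and n: "n > 0"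
    and L: "validL L" and cnt: "\<forall>k\<ge>2. count (mset (map length L)) k = count (aS h B) k"
  shows "LF (young_gf n rho) h B = Mrho n rho (prodL L) * real n powr (real (\<Sum>i\<in>B. h i - 1) / 2)"
proof -
  define a where "a = aS h B"
  have a0: "0 \<notin># a" using pos fin by (auto simp: a_def aS_def)
  define P where "P s = (s \<in> S_inf \<and> (\<forall>k\<ge>2. num_cycles s k = count a k))" for s
  have Pw: "P (prodL L)" unfolding P_def using prodL_Sinf num_cycles_prodL[OF L] cnt by (simp add: a_def)
  then have Ps: "P (SOME s. P s)" by (rule someI[where P = P])
  have conj: "conjugate (SOME s. P s) (prodL L)"
    using Ps Pw unfolding P_def by (intro Sinf_conjugate) auto
  have M: "Mrho n rho (SOME s. P s) = Mrho n rho (prodL L)" using Mrho_conj[OF conj] .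
  have "young_gf n rho a = Mrho n rho (prodL L) *
      (\<Prod>k\<in>set_mset a. real n powr (real (count a k * (k - 1)) / 2) / fact (count a k))"
    using a0 M by (simp add: young_gf_def P_def)
  then have "LF (young_gf n rho) h B = Mrho n rho (prodL L) *
      ((\<Prod>k\<in>set_mset a. fact (count a k)) * (\<Prod>k\<in>set_mset a. real n powr (real (count a k * (k - 1)) / 2) / fact (count a k)))"
    by (simp add: LF_def a_def[symmetric] Wm_def algebra_simps)
  also have "(\<Prod>k\<in>set_mset a. fact (count a k)) * (\<Prod>k\<in>set_mset a. real n powr (real (count a k * (k - 1)) / 2) / fact (count a k))
     = (\<Prod>k\<in>set_mset a. real n powr (real (count a k * (k - 1)) / 2))"
    by (subst prod.distrib[symmetric]) (rule prod.cong, auto)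
  also have "\<dots> = real n powr (\<Sum>k\<in>set_mset a. real (count a k * (k - 1)) / 2)"
    using n by (simp add: powr_sum)
  also have "(\<Sum>k\<in>set_mset a. real (count a k * (k - 1)) / 2) = real (\<Sum>k\<in>set_mset a. count a k * (k - 1)) / 2"
    by (simp add: sum_divide_distrib)
  also have "(\<Sum>k\<in>set_mset a. count a k * (k - 1)) = (\<Sum>i\<in>B. h i - 1)"
    unfolding a_def by (rule sum_count_aS[OF fin])
  finally show ?thesis .
qed


lemma cycles_data:
  assumes "\<forall>s\<in>set ss. \<exists>k. is_cycle_len k s"
  obtains cs where "\<forall>i<length ss. distinct (cs i) \<and> cs i \<noteq> [] \<and> ss ! i = cycle_of_list (cs i)"
proof -
  have "\<forall>i. \<exists>c. i < length ss \<longrightarrow> (distinct c \<and> c \<noteq> [] \<and> ss ! i = cycle_of_list c)"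
  proof
    fix i
    show "\<exists>c. i < length ss \<longrightarrow> (distinct c \<and> c \<noteq> [] \<and> ss ! i = cycle_of_list c)"
    proof (cases "i < length ss")
      case True
      then obtain k where "is_cycle_len k (ss ! i)" using assms nth_mem by blast
      then obtain c where "k \<ge> 1" "distinct c" "length c = k" "ss ! i = cycle_of_list c"
        unfolding is_cycle_len_def by blast
      then show ?thesis by (intro exI[of _ c]) auto
    qed simp
  qed
  then obtain cs where "\<forall>i. i < length ss \<longrightarrow> (distinct (cs i) \<and> cs i \<noteq> [] \<and> ss ! i = cycle_of_list (cs i))"
    by metis
  then show ?thesis using that by blast
qed

lemma distinct_concat_filt:
  assumes "distinct xs" "\<forall>i\<in>set xs. distinct (cs i)"
    "\<forall>i\<in>set xs. \<forall>j\<in>set xs. i \<noteq> j \<longrightarrow> length (cs i) \<ge> 2 \<longrightarrow> length (cs j) \<ge> 2 \<longrightarrow> set (cs i) \<inter> set (cs j) = {}"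
  shows "distinct (concat (filt (map cs xs)))"
  using assms
proof (induction xs)
  case Nil then show ?case by (simp add: filt_def)
next
  case (Cons i xs)
  have IH: "distinct (concat (filt (map cs xs)))" using Cons by simp
  have sub: "set (concat (filt (map cs xs))) \<subseteq> \<Union>{set (cs j) | j. j \<in> set xs \<and> length (cs j) \<ge> 2}"
    by (auto simp: filt_def)
  show ?case
  proof (cases "length (cs i) \<ge> 2")
    case True
    have "set (cs i) \<inter> set (concat (filt (map cs xs))) = {}"
    proof -
      have "set (cs i) \<inter> set (cs j) = {}" if "j \<in> set xs" "length (cs j) \<ge> 2" for j
        using Cons.prems(1,3) True that by auto
      then show ?thesis using sub by blast
    qed
    then show ?thesis using True IH Cons.prems(2) by (simp add: filt_def)
  next
    case False
    then show ?thesis using IH by (simp add: filt_def)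
  qed
qed

lemma foldr_prodL:
  assumes "\<forall>j\<in>set xs. ss ! j = cycle_of_list (cs j)"
  shows "foldr (\<lambda>j g. (ss ! j) \<circ> g) xs id = prodL (map cs xs)"
  using assms by (induction xs) auto

lemma count_filt: "k \<ge> 2 \<Longrightarrow> count (mset (map length (filt X))) k = count (mset (map length X)) k"
  by (induction X) (auto simp: filt_def)

lemma mset_sorted_set: "finite B \<Longrightarrow> mset (sorted_list_of_set B) = mset_set B"
  by (metis distinct_sorted_list_of_set mset_set_set set_sorted_list_of_set)

lemma main_id:
  assumes cyc: "\<forall>s\<in>set ss. \<exists>k. is_cycle_len k s"
    and disj: "\<forall>i<length ss. \<forall>j<length ss. i \<noteq> j \<longrightarrow> supp (ss ! i) \<inter> supp (ss ! j) = {}"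
    and ne: "ss \<noteq> []" and n: "n > 0"
  shows "deriv0 (mps_ln (young_gf n rho)) (map (\<lambda>s. tlen s + 1) ss)
       = real n powr (real (sum_list (map tlen ss)) / 2) * kappa n rho ss"
proof -
  obtain cs where cs: "\<forall>i<length ss. distinct (cs i) \<and> cs i \<noteq> [] \<and> ss ! i = cycle_of_list (cs i)"
    using cycles_data[OF cyc] by blast
  define r where "r = length ss"
  define js where "js = map (\<lambda>s. tlen s + 1) ss"
  define h where "h = (\<lambda>i. js ! i)"
  have lenjs: "length js = r" by (simp add: js_def r_def)
  have tl: "tlen (ss ! i) = length (cs i) - 1" if "i < r" for i
    using cs that tlen_cycle by (simp add: r_def)
  have hi: "h i = length (cs i)" if "i < r" for i
    using tl[OF that] cs that by (simp add: h_def js_def r_def)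
  define LB where "LB B = filt (map cs (sorted_list_of_set B))" for B
  have LBfacts: "validL (LB B) \<and> prodL (LB B) = prod_perms ss B \<and>
      (\<forall>k\<ge>2. count (mset (map length (LB B))) k = count (aS h B) k)" if B: "B \<subseteq> {..<r}" for B
  proof (intro conjI)
    have finB: "finite B" using B finite_subset by blast
    have sB: "set (sorted_list_of_set B) = B" using finB by simp
    have dc: "distinct (concat (LB B))" unfolding LB_def
    proof (rule distinct_concat_filt)
      show "distinct (sorted_list_of_set B)" by simp
      show "\<forall>i\<in>set (sorted_list_of_set B). distinct (cs i)" using sB B cs by (auto simp: r_def)
      show "\<forall>i\<in>set (sorted_list_of_set B). \<forall>j\<in>set (sorted_list_of_set B). i \<noteq> j \<longrightarrow> 2 \<le> length (cs i) \<longrightarrow> 2 \<le> length (cs j) \<longrightarrow> set (cs i) \<inter> set (cs j) = {}"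
      proof (intro ballI impI)
        fix i j assume ij: "i \<in> set (sorted_list_of_set B)" "j \<in> set (sorted_list_of_set B)" "i \<noteq> j"
          "2 \<le> length (cs i)" "2 \<le> length (cs j)"
        then have ir: "i < r" "j < r" using sB B by auto
        have "supp (ss ! i) = set (cs i)" "supp (ss ! j) = set (cs j)"
          using supp_cycle cs ir ij(4,5) by (simp_all add: r_def)
        moreover have "supp (ss ! i) \<inter> supp (ss ! j) = {}" using disj ir ij(3) by (simp add: r_def)
        ultimately show "set (cs i) \<inter> set (cs j) = {}" by simp
      qed
    qed
    show "validL (LB B)" using dc by (simp add: validL_def LB_def filt_def)
    have "prod_perms ss B = prodL (map cs (sorted_list_of_set B))"
      unfolding prod_perms_def using sB B cs by (intro foldr_prodL) (auto simp: r_def)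
    then show "prodL (LB B) = prod_perms ss B" by (simp add: LB_def prodL_filt)
    show "\<forall>k\<ge>2. count (mset (map length (LB B))) k = count (aS h B) k"
    proof (intro allI impI)
      fix k :: nat assume k: "k \<ge> 2"
      have "count (mset (map length (LB B))) k = count (mset (map length (map cs (sorted_list_of_set B)))) k"
        unfolding LB_def using count_filt[OF k] by blast
      also have "mset (map length (map cs (sorted_list_of_set B))) = image_mset (\<lambda>i. length (cs i)) (mset_set B)"
      proof -
        have "map length (map cs (sorted_list_of_set B)) = map (\<lambda>i. length (cs i)) (sorted_list_of_set B)" by simp
        then have "mset (map length (map cs (sorted_list_of_set B))) = image_mset (\<lambda>i. length (cs i)) (mset (sorted_list_of_set B))"
          by (simp only: mset_map)
        then show ?thesis by (simp only: mset_sorted_set[OF finB])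
      qed
      also have "\<dots> = aS h B" unfolding aS_def
        by (rule image_mset_cong) (use hi B finB in auto)
      finally show "count (mset (map length (LB B))) k = count (aS h B) k" .
    qed
  qed
  have LFB: "LF (young_gf n rho) h B = Mrho n rho (prod_perms ss B) * real n powr (real (\<Sum>i\<in>B. h i - 1) / 2)"
    if B: "B \<subseteq> {..<r}" for B
  proof -
    have finB: "finite B" using B finite_subset by blast
    have pos: "\<forall>i\<in>B. h i \<ge> 1" using B by (auto simp: h_def js_def r_def)
    show ?thesis using LF_young[OF finB pos n, of "LB B" rho] LBfacts[OF B] by simp
  qed
  define E where "E = real (\<Sum>i<r. h i - 1) / 2"
  have Esum: "(\<Sum>B\<in>P. real (\<Sum>i\<in>B. h i - 1) / 2) = E" if P: "partition_on {..<r} P" for P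
  proof -
    have "(\<Sum>i<r. h i - 1) = (\<Sum>i\<in>\<Union>P. h i - 1)" using partition_onD1[OF P] by simp
    also have "\<dots> = (\<Sum>B\<in>P. \<Sum>i\<in>B. h i - 1)"
    proof (rule sum.Union_disjoint[unfolded comp_def])
      show "\<forall>A\<in>P. finite A" using partition_onD1[OF P] by (metis Union_upper finite_lessThan finite_subset)
      show "\<forall>A\<in>P. \<forall>B\<in>P. A \<noteq> B \<longrightarrow> A \<inter> B = {}"
        using partition_onD2[OF P] by (auto simp: disjoint_def)
    qed
    finally show ?thesis by (simp add: E_def sum_divide_distrib)
  qed
  have Eval: "E = real (sum_list (map tlen ss)) / 2"
  proof -
    have "(\<Sum>i<r. h i - 1) = (\<Sum>i<r. tlen (ss ! i))"
      by (rule sum.cong) (auto simp: h_def js_def r_def)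
    also have "\<dots> = sum_list (map tlen ss)"
      by (simp add: sum_list_sum_nth r_def atLeast0LessThan)
    finally show ?thesis by (simp add: E_def)
  qed
  have "deriv0 (mps_ln (young_gf n rho)) js =
    (\<Sum>P\<in>{P. partition_on {..<r} P}. (-1) ^ (card P - 1) * fact (card P - 1) * (\<Prod>B\<in>P. LF (young_gf n rho) h B))"
    using deriv0_ln[of js "young_gf n rho"] ne lenjs by (simp add: js_def h_def)
  also have "\<dots> = (\<Sum>P\<in>{P. partition_on {..<r} P}. real n powr E * ((-1) ^ (card P - 1) * fact (card P - 1) * (\<Prod>B\<in>P. Mrho n rho (prod_perms ss B))))"
  proof (rule sum.cong[OF refl])
    fix P assume "P \<in> {P. partition_on {..<r} P}"
    then have P: "partition_on {..<r} P" by simp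
    have sub: "B \<subseteq> {..<r}" if "B \<in> P" for B using partition_onD1[OF P] that by blast
    have finP: "finite P" using finite_elements[OF _ P] by simp
    have "(\<Prod>B\<in>P. LF (young_gf n rho) h B) = (\<Prod>B\<in>P. Mrho n rho (prod_perms ss B) * real n powr (real (\<Sum>i\<in>B. h i - 1) / 2))"
      by (rule prod.cong[OF refl]) (simp add: LFB sub)
    also have "\<dots> = (\<Prod>B\<in>P. Mrho n rho (prod_perms ss B)) * real n powr (\<Sum>B\<in>P. real (\<Sum>i\<in>B. h i - 1) / 2)"
      using n by (simp add: prod.distrib powr_sum)
    also have "\<dots> = (\<Prod>B\<in>P. Mrho n rho (prod_perms ss B)) * real n powr E" using Esum[OF P] by simp
    finally show "(-1) ^ (card P - 1) * fact (card P - 1) * (\<Prod>B\<in>P. LF (young_gf n rho) h B) =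
      real n powr E * ((-1) ^ (card P - 1) * fact (card P - 1) * (\<Prod>B\<in>P. Mrho n rho (prod_perms ss B)))"
      by (simp add: algebra_simps)
  qed
  also have "\<dots> = real n powr E * kappa n rho ss"
    by (simp add: kappa_def sum_distrib_left r_def)
  finally show ?thesis using Eval by (simp add: js_def)
qed



lemma tlen_len: "is_cycle_len k s \<Longrightarrow> tlen s + 1 = k"
proof -
  assume "is_cycle_len k s"
  then obtain c where "k \<ge> 1" "distinct c" "length c = k" "s = cycle_of_list c"
    unfolding is_cycle_len_def by blast
  then show ?thesis using tlen_cycle[of c] by (cases c) auto
qed

lemma partitions_one: "{P. partition_on {..<Suc 0} P} = {{{0}}}"
proof -
  have "partition_on {0::nat} P \<longleftrightarrow> P = {{0}}" for P
  proof
    assume P: "partition_on {0::nat} P"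
    have B0: "B = {0}" if B: "B \<in> P" for B
    proof -
      have "B \<subseteq> {0}" using partition_onD1[OF P] B by (simp add: Union_upper)
      moreover have "B \<noteq> {}" using partition_onD3[OF P] B by metis
      ultimately show ?thesis using subset_singletonD by metis
    qed
    have "P \<noteq> {}" using partition_onD1[OF P] by (metis Union_empty singleton_insert_inj_eq' insert_not_empty)
    then obtain B where "B \<in> P" by blast
    then have "{0} \<in> P" using B0 by metis
    moreover have "P \<subseteq> {{0}}" using B0 by (simp add: subset_iff)
    ultimately show "P = {{0}}" by auto
  next
    assume "P = {{0}}" then show "partition_on {0::nat} P" by (simp add: partition_on_space)
  qed
  moreover have "{..<Suc 0} = {0::nat}" by auto
  ultimately show ?thesis by auto
qed

lemma kappa_single: "kappa n rho [s] = Mrho n rho s"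
  by (simp add: kappa_def partitions_one prod_perms_def)

lemma ev1:
  assumes "is_cycle_len k s" "n > 0"
  shows "deriv0 (mps_ln (young_gf n rho)) [k] = real n powr (real (tlen s) / 2) * Mrho n rho s"
proof -
  have c: "\<forall>s'\<in>set [s]. \<exists>k. is_cycle_len k s'" using assms(1) by auto
  have d: "\<forall>i<length [s]. \<forall>j<length [s]. i \<noteq> j \<longrightarrow> supp ([s] ! i) \<inter> supp ([s] ! j) = {}" by simp
  show ?thesis using main_id[OF c d _ assms(2), of rho] tlen_len[OF assms(1)] by (simp add: kappa_single)
qed

lemma ev2:
  assumes "is_cycle_len k1 s1" "is_cycle_len k2 s2" "supp s1 \<inter> supp s2 = {}" "n > 0"
  shows "real n * deriv0 (mps_ln (young_gf n rho)) [k1, k2] =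
    real n powr (real (tlen s1 + tlen s2) / 2 + 1) * kappa n rho [s1, s2]"
proof -
  have d: "\<forall>i<length [s1, s2]. \<forall>j<length [s1, s2]. i \<noteq> j \<longrightarrow> supp ([s1, s2] ! i) \<inter> supp ([s1, s2] ! j) = {}"
    using assms(3) by (auto simp: less_Suc_eq Int_commute)
  have c: "\<forall>s\<in>set [s1, s2]. \<exists>k. is_cycle_len k s" using assms(1,2) by auto
  have "deriv0 (mps_ln (young_gf n rho)) [k1, k2] = real n powr (real (tlen s1 + tlen s2) / 2) * kappa n rho [s1, s2]"
    using main_id[OF c d _ assms(4), of rho] tlen_len[OF assms(1)] tlen_len[OF assms(2)] by simp
  then show ?thesis using assms(4) by (simp add: powr_add)
qed

lemma ev3:
  assumes c: "\<forall>s\<in>set ss. \<exists>k. is_cycle_len k s"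
    and d: "\<forall>i<length ss. \<forall>j<length ss. i \<noteq> j \<longrightarrow> supp (ss ! i) \<inter> supp (ss ! j) = {}"
    and l: "length ss \<ge> 3" and n: "n > 0"
  shows "real n powr (real (length (map (\<lambda>s. tlen s + 1) ss)) / 2) * deriv0 (mps_ln (young_gf n rho)) (map (\<lambda>s. tlen s + 1) ss)
    = real n powr (real (sum_list (map tlen ss) + length ss) / 2) * kappa n rho ss"
proof -
  have ne: "ss \<noteq> []" using l by auto
  show ?thesis using main_id[OF c d ne n, of rho]
    by (simp add: powr_add[symmetric] add_divide_distrib algebra_simps)
qed

lemma exist_cycles:
  "\<forall>k\<in>set ks. k \<ge> 1 \<Longrightarrow> \<exists>ss. map (\<lambda>s. tlen s + 1) ss = ks \<and> (\<forall>i<length ss. is_cycle_len (ks ! i) (ss ! i)) \<and>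
     (\<forall>i<length ss. \<forall>j<length ss. i \<noteq> j \<longrightarrow> supp (ss ! i) \<inter> supp (ss ! j) = {}) \<and>
     (\<forall>s\<in>set ss. supp s \<subseteq> {..<sum_list ks})"
proof (induction ks)
  case Nil then show ?case by (intro exI[of _ "[]"]) simp
next
  case (Cons k ks)
  then obtain ss where ss: "map (\<lambda>s. tlen s + 1) ss = ks" "\<forall>i<length ss. is_cycle_len (ks ! i) (ss ! i)"
     "\<forall>i<length ss. \<forall>j<length ss. i \<noteq> j \<longrightarrow> supp (ss ! i) \<inter> supp (ss ! j) = {}"
     "\<forall>s\<in>set ss. supp s \<subseteq> {..<sum_list ks}" by auto
  define m where "m = sum_list ks"
  define s0 where "s0 = cycle_of_list [m..<m + k]"
  have k: "k \<ge> 1" using Cons.prems by simp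
  have c0: "is_cycle_len k s0" unfolding is_cycle_len_def s0_def using k by (intro conjI exI[of _ "[m..<m+k]"]) auto
  have supp0: "supp s0 \<subseteq> {m..<m + k}" unfolding s0_def supp_def using id_outside_supp[of _ "[m..<m+k]"] by fastforce
  have disj0: "supp s0 \<inter> supp s = {}" if "s \<in> set ss" for s
  proof -
    have "supp s \<subseteq> {..<m}" using ss(4) that by (simp add: m_def)
    then have "supp s0 \<inter> supp s \<subseteq> {m..<m + k} \<inter> {..<m}" using supp0 by blast
    also have "\<dots> = {}" by auto
    finally show ?thesis by blast
  qed
  show ?case
  proof (intro exI[of _ "s0 # ss"] conjI)
    show "map (\<lambda>s. tlen s + 1) (s0 # ss) = k # ks" using ss(1) tlen_len[OF c0] by simp
    show "\<forall>i<length (s0 # ss). is_cycle_len ((k # ks) ! i) ((s0 # ss) ! i)"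
      using c0 ss(2) by (auto simp: nth_Cons split: nat.splits)
    show "\<forall>i<length (s0 # ss). \<forall>j<length (s0 # ss). i \<noteq> j \<longrightarrow> supp ((s0 # ss) ! i) \<inter> supp ((s0 # ss) ! j) = {}"
    proof (intro allI impI)
      fix i j assume ij: "i < length (s0 # ss)" "j < length (s0 # ss)" "i \<noteq> j"
      show "supp ((s0 # ss) ! i) \<inter> supp ((s0 # ss) ! j) = {}"
      proof (cases i)
        case 0
        then obtain j' where j': "j = Suc j'" "j' < length ss" using ij by (cases j) auto
        then have "ss ! j' \<in> set ss" by simp
        then show ?thesis using 0 j' disj0 by simp
      next
        case (Suc i')
        then have i': "i' < length ss" using ij by simp
        show ?thesis
        proof (cases j)
          case 0
          have "ss ! i' \<in> set ss" using i' by simp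
          then show ?thesis using Suc 0 disj0[of "ss ! i'"] by (simp add: Int_commute)
        next
          case (Suc j')
          then have "j' < length ss" "i' \<noteq> j'" using ij \<open>i = Suc i'\<close> by auto
          then show ?thesis using \<open>i = Suc i'\<close> Suc ss(3) i' by simp
        qed
      qed
    qed
    show "\<forall>s\<in>set (s0 # ss). supp s \<subseteq> {..<sum_list (k # ks)}"
    proof
      fix s assume "s \<in> set (s0 # ss)"
      then consider "s = s0" | "s \<in> set ss" by auto
      then show "supp s \<subseteq> {..<sum_list (k # ks)}"
      proof cases
        case 1 then show ?thesis using supp0 by (auto simp: m_def)
      next
        case 2
        then have "supp s \<subseteq> {..<sum_list ks}" using ss(4) by blast
        also have "\<dots> \<subseteq> {..<sum_list (k # ks)}" by auto
        finally show ?thesis .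
      qed
    qed
  qed
qed

theorem mainTheorem11:
  fixes rho :: "nat \<Rightarrow> nat list \<Rightarrow> real"
  assumes "\<forall>n\<ge>1. prob_on_Y n (rho n)"
  shows "CLT_appropriate rho \<longleftrightarrow>
    (\<exists>(c :: nat \<Rightarrow> real) (d :: nat \<Rightarrow> nat \<Rightarrow> real).
      (\<forall>k s. is_cycle_len k s \<longrightarrow>
         (\<lambda>n. real n powr (real (tlen s) / 2) * Mrho n (rho n) s) \<longlonglongrightarrow> c k) \<and>
      (\<forall>k1 k2 s1 s2. is_cycle_len k1 s1 \<longrightarrow> is_cycle_len k2 s2 \<longrightarrow> supp s1 \<inter> supp s2 = {} \<longrightarrow>
         (\<lambda>n. real n powr (real (tlen s1 + tlen s2) / 2 + 1) * kappa n (rho n) [s1, s2])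
           \<longlonglongrightarrow> d k1 k2) \<and>
      (\<forall>ss. length ss \<ge> 3 \<longrightarrow> (\<forall>s\<in>set ss. \<exists>k. is_cycle_len k s) \<longrightarrow>
         (\<forall>i<length ss. \<forall>j<length ss. i \<noteq> j \<longrightarrow> supp (ss ! i) \<inter> supp (ss ! j) = {}) \<longrightarrow>
         (\<lambda>n. real n powr (real (sum_list (map tlen ss) + length ss) / 2) * kappa n (rho n) ss)
           \<longlonglongrightarrow> 0))"
proof -
  have evpos: "eventually (\<lambda>n. n > (0::nat)) sequentially" by (simp add: eventually_gt_at_top)
  show ?thesis
  proof
    assume "CLT_appropriate rho"
    then obtain c d where
      C1: "\<forall>i\<ge>1. (\<lambda>n. deriv0 (mps_ln (young_gf n (rho n))) [i]) \<longlonglongrightarrow> c i" and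
      C2: "\<forall>i\<ge>1. \<forall>j\<ge>1. (\<lambda>n. real n * deriv0 (mps_ln (young_gf n (rho n))) [i, j]) \<longlonglongrightarrow> d i j" and
      C3: "\<forall>is. length is \<ge> 3 \<longrightarrow> (\<forall>i\<in>set is. i \<ge> 1) \<longrightarrow>
        (\<lambda>n. real n powr (real (length is) / 2) * deriv0 (mps_ln (young_gf n (rho n))) is) \<longlonglongrightarrow> 0"
      unfolding CLT_appropriate_def by blast
    show "\<exists>(c :: nat \<Rightarrow> real) (d :: nat \<Rightarrow> nat \<Rightarrow> real).
      (\<forall>k s. is_cycle_len k s \<longrightarrow>
         (\<lambda>n. real n powr (real (tlen s) / 2) * Mrho n (rho n) s) \<longlonglongrightarrow> c k) \<and>
      (\<forall>k1 k2 s1 s2. is_cycle_len k1 s1 \<longrightarrow> is_cycle_len k2 s2 \<longrightarrow> supp s1 \<inter> supp s2 = {} \<longrightarrow>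
         (\<lambda>n. real n powr (real (tlen s1 + tlen s2) / 2 + 1) * kappa n (rho n) [s1, s2])
           \<longlonglongrightarrow> d k1 k2) \<and>
      (\<forall>ss. length ss \<ge> 3 \<longrightarrow> (\<forall>s\<in>set ss. \<exists>k. is_cycle_len k s) \<longrightarrow>
         (\<forall>i<length ss. \<forall>j<length ss. i \<noteq> j \<longrightarrow> supp (ss ! i) \<inter> supp (ss ! j) = {}) \<longrightarrow>
         (\<lambda>n. real n powr (real (sum_list (map tlen ss) + length ss) / 2) * kappa n (rho n) ss)
           \<longlonglongrightarrow> 0)"
    proof (intro exI[of _ c] exI[of _ d] conjI allI impI)
      fix k s assume ks: "is_cycle_len k s"
      have "k \<ge> 1" using ks by (simp add: is_cycle_len_def)
      then have "(\<lambda>n. deriv0 (mps_ln (young_gf n (rho n))) [k]) \<longlonglongrightarrow> c k" using C1[rule_format] by simp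
      moreover have "eventually (\<lambda>n. deriv0 (mps_ln (young_gf n (rho n))) [k] = real n powr (real (tlen s) / 2) * Mrho n (rho n) s) sequentially"
        using evpos by (rule eventually_mono) (rule ev1[OF ks])
      ultimately show "(\<lambda>n. real n powr (real (tlen s) / 2) * Mrho n (rho n) s) \<longlonglongrightarrow> c k"
        by (rule Lim_transform_eventually)
    next
      fix k1 k2 s1 s2 assume k1: "is_cycle_len k1 s1" and k2: "is_cycle_len k2 s2" and dj: "supp s1 \<inter> supp s2 = {}"
      have "k1 \<ge> 1" "k2 \<ge> 1" using k1 k2 by (simp_all add: is_cycle_len_def)
      then have "(\<lambda>n. real n * deriv0 (mps_ln (young_gf n (rho n))) [k1, k2]) \<longlonglongrightarrow> d k1 k2" using C2[rule_format] by simp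
      moreover have "eventually (\<lambda>n. real n * deriv0 (mps_ln (young_gf n (rho n))) [k1, k2] =
          real n powr (real (tlen s1 + tlen s2) / 2 + 1) * kappa n (rho n) [s1, s2]) sequentially"
        using evpos by (rule eventually_mono) (rule ev2[OF k1 k2 dj])
      ultimately show "(\<lambda>n. real n powr (real (tlen s1 + tlen s2) / 2 + 1) * kappa n (rho n) [s1, s2]) \<longlonglongrightarrow> d k1 k2"
        by (rule Lim_transform_eventually)
    next
      fix ss :: "(nat \<Rightarrow> nat) list"
      assume l: "length ss \<ge> 3" and cy: "\<forall>s\<in>set ss. \<exists>k. is_cycle_len k s"
        and dj: "\<forall>i<length ss. \<forall>j<length ss. i \<noteq> j \<longrightarrow> supp (ss ! i) \<inter> supp (ss ! j) = {}"
      define js where "js = map (\<lambda>s. tlen s + 1) ss"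
      have "length js \<ge> 3" "\<forall>i\<in>set js. i \<ge> 1" using l by (auto simp: js_def)
      then have "(\<lambda>n. real n powr (real (length js) / 2) * deriv0 (mps_ln (young_gf n (rho n))) js) \<longlonglongrightarrow> 0"
        using C3[rule_format] by simp
      moreover have "eventually (\<lambda>n. real n powr (real (length js) / 2) * deriv0 (mps_ln (young_gf n (rho n))) js =
          real n powr (real (sum_list (map tlen ss) + length ss) / 2) * kappa n (rho n) ss) sequentially"
        using evpos by (rule eventually_mono) (unfold js_def, rule ev3[OF cy dj l])
      ultimately show "(\<lambda>n. real n powr (real (sum_list (map tlen ss) + length ss) / 2) * kappa n (rho n) ss) \<longlonglongrightarrow> 0"
        by (rule Lim_transform_eventually)
    qed
  next
    assume "\<exists>(c :: nat \<Rightarrow> real) (d :: nat \<Rightarrow> nat \<Rightarrow> real).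
      (\<forall>k s. is_cycle_len k s \<longrightarrow>
         (\<lambda>n. real n powr (real (tlen s) / 2) * Mrho n (rho n) s) \<longlonglongrightarrow> c k) \<and>
      (\<forall>k1 k2 s1 s2. is_cycle_len k1 s1 \<longrightarrow> is_cycle_len k2 s2 \<longrightarrow> supp s1 \<inter> supp s2 = {} \<longrightarrow>
         (\<lambda>n. real n powr (real (tlen s1 + tlen s2) / 2 + 1) * kappa n (rho n) [s1, s2])
           \<longlonglongrightarrow> d k1 k2) \<and>
      (\<forall>ss. length ss \<ge> 3 \<longrightarrow> (\<forall>s\<in>set ss. \<exists>k. is_cycle_len k s) \<longrightarrow>
         (\<forall>i<length ss. \<forall>j<length ss. i \<noteq> j \<longrightarrow> supp (ss ! i) \<inter> supp (ss ! j) = {}) \<longrightarrow>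
         (\<lambda>n. real n powr (real (sum_list (map tlen ss) + length ss) / 2) * kappa n (rho n) ss)
           \<longlonglongrightarrow> 0)"
    then obtain c :: "nat \<Rightarrow> real" and d :: "nat \<Rightarrow> nat \<Rightarrow> real" where
      S1: "\<forall>k s. is_cycle_len k s \<longrightarrow> (\<lambda>n. real n powr (real (tlen s) / 2) * Mrho n (rho n) s) \<longlonglongrightarrow> c k" and
      S2: "\<forall>k1 k2 s1 s2. is_cycle_len k1 s1 \<longrightarrow> is_cycle_len k2 s2 \<longrightarrow> supp s1 \<inter> supp s2 = {} \<longrightarrow>
         (\<lambda>n. real n powr (real (tlen s1 + tlen s2) / 2 + 1) * kappa n (rho n) [s1, s2]) \<longlonglongrightarrow> d k1 k2" and
      S3: "\<forall>ss. length ss \<ge> 3 \<longrightarrow> (\<forall>s\<in>set ss. \<exists>k. is_cycle_len k s) \<longrightarrow>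
         (\<forall>i<length ss. \<forall>j<length ss. i \<noteq> j \<longrightarrow> supp (ss ! i) \<inter> supp (ss ! j) = {}) \<longrightarrow>
         (\<lambda>n. real n powr (real (sum_list (map tlen ss) + length ss) / 2) * kappa n (rho n) ss) \<longlonglongrightarrow> 0"
      by blast
    show "CLT_appropriate rho" unfolding CLT_appropriate_def
    proof (intro exI[of _ c] exI[of _ d] conjI allI impI)
      fix i :: nat assume i: "i \<ge> 1"
      have pre: "\<forall>k\<in>set [i]. k \<ge> 1" using i by simp
      obtain ss where ss: "map (\<lambda>s. tlen s + 1) ss = [i]" "\<forall>j<length ss. is_cycle_len ([i] ! j) (ss ! j)"
        using exist_cycles[OF pre] by (elim exE conjE) (rule that; assumption)
      have "length ss = 1" using arg_cong[OF ss(1), of length] by simp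
      then obtain s where s: "ss = [s]" by (auto simp: length_Suc_conv)
      have ks: "is_cycle_len i s" using ss(2) s by auto
      have "(\<lambda>n. real n powr (real (tlen s) / 2) * Mrho n (rho n) s) \<longlonglongrightarrow> c i" using S1[rule_format, OF ks] .
      moreover have "eventually (\<lambda>n. real n powr (real (tlen s) / 2) * Mrho n (rho n) s = deriv0 (mps_ln (young_gf n (rho n))) [i]) sequentially"
        using evpos by (rule eventually_mono) (rule ev1[OF ks, symmetric])
      ultimately show "(\<lambda>n. deriv0 (mps_ln (young_gf n (rho n))) [i]) \<longlonglongrightarrow> c i"
        by (rule Lim_transform_eventually)
    next
      fix i j :: nat assume i: "i \<ge> 1" and j: "j \<ge> 1"
      have pre: "\<forall>k\<in>set [i, j]. k \<ge> 1" using i j by simp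
      obtain ss where ss: "map (\<lambda>s. tlen s + 1) ss = [i, j]" "\<forall>k<length ss. is_cycle_len ([i, j] ! k) (ss ! k)"
        "\<forall>a<length ss. \<forall>b<length ss. a \<noteq> b \<longrightarrow> supp (ss ! a) \<inter> supp (ss ! b) = {}"
        using exist_cycles[OF pre] by (elim exE conjE) (rule that; assumption)
      then obtain s1 s2 where s: "ss = [s1, s2]"
      proof -
        have "length ss = 2" using arg_cong[OF ss(1), of length] by simp
        then show ?thesis using that by (auto simp: length_Suc_conv numeral_2_eq_2)
      qed
      have k1: "is_cycle_len i s1" and k2: "is_cycle_len j s2" using ss(2) s by auto
      have dj: "supp s1 \<inter> supp s2 = {}" using ss(3)[rule_format, of 0 1] s by simp
      have "(\<lambda>n. real n powr (real (tlen s1 + tlen s2) / 2 + 1) * kappa n (rho n) [s1, s2]) \<longlonglongrightarrow> d i j"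
        using S2[rule_format, OF k1 k2 dj] .
      moreover have "eventually (\<lambda>n. real n powr (real (tlen s1 + tlen s2) / 2 + 1) * kappa n (rho n) [s1, s2] =
          real n * deriv0 (mps_ln (young_gf n (rho n))) [i, j]) sequentially"
        using evpos by (rule eventually_mono) (rule ev2[OF k1 k2 dj, symmetric])
      ultimately show "(\<lambda>n. real n * deriv0 (mps_ln (young_gf n (rho n))) [i, j]) \<longlonglongrightarrow> d i j"
        by (rule Lim_transform_eventually)
    next
      fix "is" :: "nat list" assume l: "length is \<ge> 3" and pos: "\<forall>i\<in>set is. i \<ge> 1"
      obtain ss where ss: "map (\<lambda>s. tlen s + 1) ss = is" "\<forall>k<length ss. is_cycle_len (is ! k) (ss ! k)"
        "\<forall>a<length ss. \<forall>b<length ss. a \<noteq> b \<longrightarrow> supp (ss ! a) \<inter> supp (ss ! b) = {}"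
        using exist_cycles[OF pos] by (elim exE conjE) (rule that; assumption)
      have len: "length ss = length is" using ss(1) by auto
      have cy: "\<forall>s\<in>set ss. \<exists>k. is_cycle_len k s" using ss(2) by (metis in_set_conv_nth)
      have l': "length ss \<ge> 3" using l len by simp
      have "(\<lambda>n. real n powr (real (sum_list (map tlen ss) + length ss) / 2) * kappa n (rho n) ss) \<longlonglongrightarrow> 0"
        using S3 l' cy ss(3) by simp
      moreover have "eventually (\<lambda>n. real n powr (real (sum_list (map tlen ss) + length ss) / 2) * kappa n (rho n) ss =
          real n powr (real (length is) / 2) * deriv0 (mps_ln (young_gf n (rho n))) is) sequentially"
        using evpos by (rule eventually_mono) (rule ev3[OF cy ss(3) l', unfolded ss(1), symmetric])
      ultimately show "(\<lambda>n. real n powr (real (length is) / 2) * deriv0 (mps_ln (young_gf n (rho n))) is) \<longlonglongrightarrow> 0"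
        by (rule Lim_transform_eventually)
    qed
  qed
qed


end
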